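(* Let $b>0$, $L\in\mathbb{N}$, and $\psi_0\in X_b^{L+1}(\mathbb{R})$ with $(D^s\widehat{\psi_0})(0)=0$ for $s=0,1,\dots,L+1$. For $0\le r\le L+1$ and $k\in\mathbb{N}_0$ define $$\widehat{\Psi}^{r}_k(\xi):=\frac{(D^{r}\widehat{\psi_0})(\xi/2^k)}{(\xi/2^k)^{L+1-r}}.$$ Then for every $0<b'<b$ there is $C_{b'}>0$ (independent of $k$) with $|\mathcal{F}^{-1}[\widehat\Psi^r_k](x)|\le C_{b'}2^ke^{-b'2^k|x|}$ for all $x\in\mathbb{R}$.
   Context: Fourier transform $\widehat f(\xi)=\mathcal{F}f(\xi)=(2\pi)^{-1/2}\int f(x)e^{-i\xi x}dx$, $\mathcal{F}^{-1}$ its inverse. Test function space (one dimension): for $b>0$ and $s\in\mathbb{N}_0$, $X_b^{s}(\mathbb{R})$ is the space of functions $\varphi$ on $\mathbb{R}$ whose distributional derivatives $D^{\alpha}\varphi$, $0\le\alpha\le s$, are functions with $\sum_{0\le\alpha\le s}\sum_{0\le\beta\le s}\|e^{b|x|}x^{\beta}D^{\alpha}\varphi(x)\|_{L^2(\mathbb{R})}<\infty$. *)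

theory Defs
  imports "HOL-Analysis.Analysis"
begin

definition test_function :: "(real \<Rightarrow> real) \<Rightarrow> bool" where
  "test_function \<phi> \<longleftrightarrow>
     (\<forall>n x. (deriv ^^ n) \<phi> differentiable (at x)) \<and>
     (\<exists>R. \<forall>x. R < \<bar>x\<bar> \<longrightarrow> \<phi> x = 0)"

text \<open>The space X_b^s(R): the distributional derivatives D^alpha psi (alpha \<le> s) are
  functions g alpha (with g 0 = psi) such that all weighted norms
  || e^{b|x|} x^beta D^alpha psi ||_{L^2}, 0 \<le> alpha, beta \<le> s, are finite.\<close>
definition X_space :: "real \<Rightarrow> nat \<Rightarrow> (real \<Rightarrow> complex) \<Rightarrow> bool" where
  "X_space b s \<psi> \<longleftrightarrow>
     (\<exists>g :: nat \<Rightarrow> real \<Rightarrow> complex. g 0 = \<psi> \<and>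
       (\<forall>\<alpha>\<le>s.
          g \<alpha> \<in> borel_measurable lborel \<and>
          (\<forall>\<beta>\<le>s. integrable lborel (\<lambda>x. (exp (b * \<bar>x\<bar>) * \<bar>x\<bar> ^ \<beta> * cmod (g \<alpha> x))\<^sup>2)) \<and>
          (\<forall>\<phi>. test_function \<phi> \<longrightarrow>
             (LINT x|lborel. \<psi> x * complex_of_real ((deriv ^^ \<alpha>) \<phi> x))
               = (-1) ^ \<alpha> * (LINT x|lborel. g \<alpha> x * complex_of_real (\<phi> x)))))"

definition fourier :: "(real \<Rightarrow> complex) \<Rightarrow> real \<Rightarrow> complex" where
  "fourier f \<xi> = complex_of_real (1 / sqrt (2 * pi)) * (LINT x|lborel. f x * cis (- (\<xi> * x)))"

definition inv_fourier :: "(real \<Rightarrow> complex) \<Rightarrow> real \<Rightarrow> complex" where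
  "inv_fourier f x = complex_of_real (1 / sqrt (2 * pi)) * (LINT \<xi>|lborel. f \<xi> * cis (\<xi> * x))"

fun cderiv :: "nat \<Rightarrow> (real \<Rightarrow> complex) \<Rightarrow> real \<Rightarrow> complex" where
  "cderiv 0 f = f"
| "cderiv (Suc n) f = (\<lambda>x. vector_derivative (cderiv n f) (at x))"

definition Psi_hat :: "(real \<Rightarrow> complex) \<Rightarrow> nat \<Rightarrow> nat \<Rightarrow> nat \<Rightarrow> real \<Rightarrow> complex" where
  "Psi_hat \<psi>\<^sub>0 L r k \<xi> =
     cderiv r (fourier \<psi>\<^sub>0) (\<xi> / 2 ^ k) / complex_of_real ((\<xi> / 2 ^ k) ^ (L + 1 - r))"

end

theory Submission
  imports Defs "HOL-Complex_Analysis.Complex_Analysis" "HOL-Computational_Algebra.Polynomial"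
begin


fun su :: "nat \<Rightarrow> (real \<Rightarrow> real) \<Rightarrow> bool" where
  "su 0 h = (\<forall>x. h differentiable (at x))"
| "su (Suc n) h = ((\<forall>x. h differentiable (at x)) \<and> su n (deriv h))"

lemma deriv_funpow_Suc: "(deriv ^^ Suc k) h = (deriv ^^ k) (deriv h)"
  by (simp add: funpow_Suc_right del: funpow.simps)

lemma su_iff: "su n h \<longleftrightarrow> (\<forall>k\<le>n. \<forall>x. (deriv ^^ k) h differentiable (at x))"
proof (induction n arbitrary: h)
  case 0 then show ?case by simp
next
  case (Suc n)
  have "(\<forall>k\<le>Suc n. \<forall>x. (deriv ^^ k) h differentiable (at x)) \<longleftrightarrow>
        (\<forall>x. h differentiable (at x)) \<and> (\<forall>k\<le>n. \<forall>x. (deriv ^^ Suc k) h differentiable (at x))"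
    by (auto simp del: funpow.simps) (metis funpow_0 le_Suc_eq not0_implies_Suc Suc_le_mono)
  then show ?case using Suc by (simp only: su.simps deriv_funpow_Suc)
qed

lemma su_diff: "su n h \<Longrightarrow> h differentiable (at x)"
  by (cases n) auto

lemma su_mono: "su (Suc n) h \<Longrightarrow> su n h"
  by (auto simp: su_iff)

lemma deriv_fun_add:
  fixes f g :: "real \<Rightarrow> real"
  assumes "\<forall>x. f differentiable (at x)" "\<forall>x. g differentiable (at x)"
  shows "deriv (\<lambda>x. f x + g x) = (\<lambda>x. deriv f x + deriv g x)"
proof
  fix x
  from assms have "(f has_real_derivative deriv f x) (at x)" "(g has_real_derivative deriv g x) (at x)"
    by (auto simp: DERIV_deriv_iff_real_differentiable)
  then show "deriv (\<lambda>x. f x + g x) x = deriv f x + deriv g x"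
    by (intro DERIV_imp_deriv derivative_intros)
qed

lemma deriv_fun_mult:
  fixes f g :: "real \<Rightarrow> real"
  assumes "\<forall>x. f differentiable (at x)" "\<forall>x. g differentiable (at x)"
  shows "deriv (\<lambda>x. f x * g x) = (\<lambda>x. deriv f x * g x + f x * deriv g x)"
proof
  fix x
  from assms have "(f has_real_derivative deriv f x) (at x)" "(g has_real_derivative deriv g x) (at x)"
    by (auto simp: DERIV_deriv_iff_real_differentiable)
  then show "deriv (\<lambda>x. f x * g x) x = deriv f x * g x + f x * deriv g x"
    by (intro DERIV_imp_deriv) (auto intro!: derivative_eq_intros)
qed

lemma DERIV_affine_comp:
  fixes f :: "real \<Rightarrow> real"
  assumes "\<forall>x. f differentiable (at x)"
  shows "((\<lambda>x. f (a + s * x)) has_real_derivative s * deriv f (a + s * x)) (at x)"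
proof -
  from assms have "(f has_real_derivative deriv f (a + s * x)) (at (a + s * x))"
    by (auto simp: DERIV_deriv_iff_real_differentiable)
  moreover have "((\<lambda>x. a + s * x) has_real_derivative s) (at x)"
    by (auto intro!: derivative_eq_intros)
  ultimately show ?thesis
    using DERIV_chain2 by (fastforce simp: mult.commute)
qed

lemma deriv_fun_affine:
  fixes f :: "real \<Rightarrow> real"
  assumes "\<forall>x. f differentiable (at x)"
  shows "deriv (\<lambda>x. f (a + s * x)) = (\<lambda>x. s * deriv f (a + s * x))"
proof
  fix x
  from assms have "(f has_real_derivative deriv f (a + s * x)) (at (a + s * x))"
    by (auto simp: DERIV_deriv_iff_real_differentiable)
  show "deriv (\<lambda>x. f (a + s * x)) x = s * deriv f (a + s * x)"
    by (intro DERIV_imp_deriv DERIV_affine_comp assms)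
qed

lemma su_add: "su n f \<Longrightarrow> su n g \<Longrightarrow> su n (\<lambda>x. f x + g x)"
proof (induction n arbitrary: f g)
  case 0 then show ?case by auto
next
  case (Suc n)
  then show ?case by (auto simp: deriv_fun_add)
qed

lemma su_mult: "su n f \<Longrightarrow> su n g \<Longrightarrow> su n (\<lambda>x. f x * g x)"
proof (induction n arbitrary: f g)
  case 0 then show ?case by auto
next
  case (Suc n)
  have "su n (\<lambda>x. deriv f x * g x)" "su n (\<lambda>x. f x * deriv g x)"
    using Suc.IH Suc.prems su_mono by auto
  then show ?case using Suc.prems by (auto simp: deriv_fun_mult intro: su_add)
qed

lemma su_const: "su n (\<lambda>x. c)"
proof (induction n arbitrary: c)
  case 0 then show ?case by auto
next
  case (Suc n)
  have "deriv (\<lambda>x. c) = (\<lambda>x. 0::real)" by (auto intro!: DERIV_imp_deriv derivative_eq_intros)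
  then show ?case using Suc by auto
qed

lemma su_affine: "su n f \<Longrightarrow> su n (\<lambda>x. f (a + s * x))"
proof (induction n arbitrary: f)
  case 0
  then show ?case
    using DERIV_affine_comp[of f a s] real_differentiable_def by auto
next
  case (Suc n)
  have "su n (\<lambda>x. s * deriv f (a + s * x))"
    using Suc by (auto intro!: su_mult su_const)
  moreover have "\<forall>x. (\<lambda>x. f (a + s * x)) differentiable (at x)"
    using Suc.prems DERIV_affine_comp[of f a s] real_differentiable_def by auto
  ultimately show ?case using Suc.prems by (auto simp: deriv_fun_affine)
qed


definition fP :: "real poly \<Rightarrow> real \<Rightarrow> real" where
  "fP P t = (if t > 0 then poly P (1/t) * exp (-1/t) else 0)"

definition Qp :: "real poly \<Rightarrow> real poly" where
  "Qp P = [:0,0,1:] * (P - pderiv P)"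

lemma poly_exp_lim: "((\<lambda>s::real. poly (p::real poly) s * exp (-s)) \<longlongrightarrow> 0) at_top"
proof -
  have "((\<lambda>s. \<Sum>i\<le>degree p. coeff p i * (s ^ i / exp s)) \<longlongrightarrow> 0) at_top"
    by (intro tendsto_null_sum tendsto_mult_right_zero tendsto_power_div_exp_0)
  moreover have "poly p s * exp (-s) = (\<Sum>i\<le>degree p. coeff p i * (s ^ i / exp s))" for s
  proof -
    have "poly p s * exp (-s) = (\<Sum>i\<le>degree p. coeff p i * s ^ i) / exp s"
      by (simp add: poly_altdef exp_minus field_simps)
    also have "\<dots> = (\<Sum>i\<le>degree p. coeff p i * (s ^ i / exp s))"
      by (simp add: sum_divide_distrib)
    finally show ?thesis .
  qed
  ultimately show ?thesis by simp
qed

lemma fP_deriv: "(fP P has_real_derivative fP (Qp P) t) (at t)"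
proof (cases "t > 0")
  case True
  have "((\<lambda>t. poly P (1/t) * exp (-1/t)) has_real_derivative fP (Qp P) t) (at t)"
  proof -
    have "((\<lambda>t. poly P (1/t) * exp (-1/t)) has_real_derivative
      poly (pderiv P) (1/t) * (- 1 / t\<^sup>2) * exp (-1/t) + poly P (1/t) * (exp (-1/t) * (1 / t\<^sup>2))) (at t)"
      using True
      by (auto intro!: derivative_eq_intros DERIV_chain2[where f="poly P"] poly_DERIV
          simp: power2_eq_square field_simps)
    moreover have "poly (pderiv P) (1/t) * (- 1 / t\<^sup>2) * exp (-1/t) + poly P (1/t) * (exp (-1/t) * (1 / t\<^sup>2))
        = fP (Qp P) t"
      using True by (simp add: fP_def Qp_def power2_eq_square field_simps)
    ultimately show ?thesis by simp
  qed
  then show ?thesis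
    by (rule has_field_derivative_transform_within_open[where S="{0<..}"])
      (use True in \<open>auto simp: fP_def\<close>)
next
  case False
  show ?thesis
  proof (cases "t < 0")
    case True
    have "((\<lambda>t. 0::real) has_real_derivative 0) (at t)" by simp
    then have "((\<lambda>t. 0::real) has_real_derivative fP (Qp P) t) (at t)" using True by (simp add: fP_def)
    then show ?thesis
      by (rule has_field_derivative_transform_within_open[where S="{..<0}"])
        (use True in \<open>auto simp: fP_def\<close>)
  next
    case False
    with \<open>\<not> t > 0\<close> have t0: "t = 0" by simp
    have "((\<lambda>y. (fP P y - fP P 0) / (y - 0)) \<longlongrightarrow> 0) (at (0::real))"
    proof (rule filterlim_split_at)
      show "((\<lambda>y. (fP P y - fP P 0) / (y - 0)) \<longlongrightarrow> 0) (at_left (0::real))"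
      proof (rule tendsto_eventually)
        show "\<forall>\<^sub>F y in at_left 0. (fP P y - fP P 0) / (y - 0) = (0::real)"
          by (auto simp: eventually_at_left_field fP_def intro: exI[of _ "-1"])
      qed
    next
      have "((\<lambda>s. poly (pCons 0 P) s * exp (-s)) \<longlongrightarrow> 0) at_top" by (rule poly_exp_lim)
      then have "((\<lambda>y. poly (pCons 0 P) (inverse y) * exp (- inverse y)) \<longlongrightarrow> 0) (at_right (0::real))"
        by (rule filterlim_compose[OF _ filterlim_inverse_at_top_right])
      moreover have "\<forall>\<^sub>F y in at_right 0. poly (pCons 0 P) (inverse y) * exp (- inverse y) = (fP P y - fP P 0) / (y - 0)"
        by (auto simp: eventually_at_right_field fP_def field_simps intro: exI[of _ 1])
      ultimately show "((\<lambda>y. (fP P y - fP P 0) / (y - 0)) \<longlongrightarrow> 0) (at_right (0::real))"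
        by (rule Lim_transform_eventually)
    qed
    then show ?thesis using t0 by (simp add: has_field_derivative_iff fP_def)
  qed
qed

lemma deriv_fP: "deriv (fP P) = fP (Qp P)"
  using fP_deriv DERIV_imp_deriv by blast

lemma su_fP: "su n (fP P)"
proof (induction n arbitrary: P)
  case 0 then show ?case using fP_deriv real_differentiable_def by auto
next
  case (Suc n) then show ?case using fP_deriv real_differentiable_def by (auto simp: deriv_fP)
qed

definition chi :: "real \<Rightarrow> real" where
  "chi x = exp 2 * (fP 1 (1 + x) * fP 1 (1 - x))"

lemma su_chi: "su n chi"
proof -
  have "su n (\<lambda>x. fP 1 (1 + 1 * x))" "su n (\<lambda>x. fP 1 (1 + (-1) * x))"
    by (rule su_affine[OF su_fP])+
  then show ?thesis unfolding chi_def by (auto intro!: su_mult su_const)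
qed

lemma chi_0: "chi 0 = 1"
  by (simp add: chi_def fP_def flip: exp_add)

lemma chi_out: "\<bar>x\<bar> \<ge> 1 \<Longrightarrow> chi x = 0"
  by (auto simp: chi_def fP_def)

lemma deriv_chi: "deriv chi x = exp 2 * (fP (Qp 1) (1 + x) * fP 1 (1 - x) - fP 1 (1 + x) * fP (Qp 1) (1 - x))"
proof -
  have "((\<lambda>x. exp 2 * (fP 1 (1 + x) * fP 1 (1 - x))) has_real_derivative
     exp 2 * (fP (Qp 1) (1 + x) * fP 1 (1 - x) - fP 1 (1 + x) * fP (Qp 1) (1 - x))) (at x)"
    by (auto intro!: derivative_eq_intros DERIV_chain2[OF fP_deriv])
  then show ?thesis unfolding chi_def[abs_def] by (rule DERIV_imp_deriv)
qed

lemma deriv_chi_out: "\<bar>x\<bar> \<ge> 1 \<Longrightarrow> deriv chi x = 0"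
  by (auto simp: deriv_chi fP_def)

lemma bounded_cs:
  fixes h :: "real \<Rightarrow> real"
  assumes "\<forall>x. h differentiable (at x)" "\<And>x. \<bar>x\<bar> \<ge> 1 \<Longrightarrow> h x = 0"
  shows "\<exists>M. \<forall>x. \<bar>h x\<bar> \<le> M"
proof -
  have "continuous_on {-1..1} h"
    using assms(1) by (meson continuous_at_imp_continuous_on differentiable_imp_continuous_within)
  then have "compact (h ` {-1..1})" by (rule compact_continuous_image) simp
  from compact_imp_bounded[OF this] obtain M where M: "\<forall>y\<in>h ` {-1..1}. norm y \<le> M"
    unfolding bounded_iff by blast
  have "\<bar>h x\<bar> \<le> max M 0" for x
  proof (cases "\<bar>x\<bar> \<ge> 1")
    case True then show ?thesis using assms(2)[of x] by simp
  next
    case False then have "x \<in> {-1..1}" by auto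
    then have "norm (h x) \<le> M" using M by blast
    then show ?thesis by simp
  qed
  then show ?thesis by blast
qed

lemma chi_bounded: "\<exists>M. \<forall>x. \<bar>chi x\<bar> \<le> M \<and> \<bar>deriv chi x\<bar> \<le> M"
proof -
  obtain M1 where "\<forall>x. \<bar>chi x\<bar> \<le> M1"
    using bounded_cs[of chi] su_chi[of 0] chi_out by auto
  moreover obtain M2 where "\<forall>x. \<bar>deriv chi x\<bar> \<le> M2"
    using bounded_cs[of "deriv chi"] su_chi[of 1] deriv_chi_out by auto
  ultimately show ?thesis by (metis max.coboundedI1 max.coboundedI2)
qed

lemma test_function_cut:
  assumes "\<And>n. su n u" "R > 0"
  shows "test_function (\<lambda>x. u x * chi (x / R))"
proof -
  have "su n (\<lambda>x. u x * chi (x / R))" for n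
  proof -
    have "su n (\<lambda>x. chi (0 + (1/R) * x))" by (rule su_affine[OF su_chi])
    then show ?thesis using assms by (auto intro!: su_mult)
  qed
  then have "\<forall>n x. (deriv ^^ n) (\<lambda>x. u x * chi (x / R)) differentiable (at x)"
    by (auto simp: su_iff)
  moreover have "\<forall>x. R < \<bar>x\<bar> \<longrightarrow> u x * chi (x / R) = 0"
    using assms(2) by (auto intro!: chi_out simp: abs_divide field_simps)
  ultimately show ?thesis unfolding test_function_def by blast
qed

lemma deriv_cut:
  assumes "\<And>n. su n u" "R > 0"
  shows "deriv (\<lambda>x. u x * chi (x / R)) x = deriv u x * chi (x / R) + u x * (deriv chi (x / R) / R)"
proof -
  have du: "(u has_real_derivative deriv u x) (at x)"
    using su_diff[OF assms(1)[of 0]] DERIV_deriv_iff_real_differentiable by blast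
  have dc: "(chi has_real_derivative deriv chi (x/R)) (at (x/R))"
    using su_diff[OF su_chi[of 0]] DERIV_deriv_iff_real_differentiable by blast
  have dd: "((\<lambda>x. x / R) has_real_derivative 1 / R) (at x)"
    using assms(2) by (auto intro!: derivative_eq_intros)
  have "((\<lambda>x. chi (x / R)) has_real_derivative deriv chi (x / R) * (1 / R)) (at x)"
    using DERIV_chain2[OF dc dd] .
  from DERIV_mult[OF du this] show ?thesis
    by (intro DERIV_imp_deriv) (simp add: algebra_simps)
qed


lemma pow_le_exp: assumes "(x::real) \<ge> 0" shows "x ^ n / fact n \<le> exp x"
proof -
  have "x ^ n / fact n = (\<Sum>k\<in>{n}. x ^ k /\<^sub>R fact k)" by (simp add: divide_inverse mult.commute)
  also have "\<dots> \<le> (\<Sum>k. x ^ k /\<^sub>R fact k)"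
    by (rule sum_le_suminf[OF summable_exp_generic]) (use assms in auto)
  also have "\<dots> = exp x" by (simp add: exp_def)
  finally show ?thesis .
qed

lemma pow_le_exp_scaled:
  assumes "(t::real) \<ge> 0" "e > 0"
  shows "t ^ n \<le> fact n / e ^ n * exp (e * t)"
proof -
  have "(e * t) ^ n / fact n \<le> exp (e * t)" using assms by (intro pow_le_exp) simp
  then show ?thesis using assms by (simp add: power_mult_distrib field_simps)
qed

lemma integrable_exp_abs:
  assumes "a > 0"
  shows "integrable lborel (\<lambda>x::real. exp (- a * \<bar>x\<bar>))"
proof -
  have "(\<lambda>x::real. exp (-a*x)) integrable_on {0..}"
    using integrable_on_exp_minus_to_infinity[OF assms, of 0] .
  then have "(\<lambda>x::real. exp (-a*x)) absolutely_integrable_on {0..}"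
    by (rule nonnegative_absolutely_integrable_1) simp
  then have "integrable lebesgue (\<lambda>x::real. indicator {0..} x *\<^sub>R exp (-a*x))"
    by (simp add: set_integrable_def)
  then have h: "integrable lborel (\<lambda>x::real. indicator {0..} x *\<^sub>R exp (-a*x))"
    by (subst (asm) integrable_completion) auto
  have h2: "integrable lborel (\<lambda>x::real. indicator {0..} (0 + (-1) * x) *\<^sub>R exp (-a*(0 + (-1) * x)))"
    by (rule lborel_integrable_real_affine[OF h]) simp
  have "integrable lborel (\<lambda>x::real. indicator {0..} x *\<^sub>R exp (-a*x) +
     indicator {0..} (0 + (-1) * x) *\<^sub>R exp (-a*(0 + (-1) * x)))"
    using h h2 by (rule Bochner_Integration.integrable_add)
  then show ?thesis
    by (rule Bochner_Integration.integrable_bound) (auto simp: indicator_def)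
qed

definition expint :: "real \<Rightarrow> (real \<Rightarrow> complex) \<Rightarrow> bool" where
  "expint b G \<longleftrightarrow> G \<in> borel_measurable lborel \<and>
     (\<forall>n c. c < b \<longrightarrow> integrable lborel (\<lambda>x. (1 + \<bar>x\<bar>) ^ n * exp (c * \<bar>x\<bar>) * cmod (G x)))"

lemma expintI:
  assumes meas: "G \<in> borel_measurable lborel"
    and int: "integrable lborel (\<lambda>x. (exp (b * \<bar>x\<bar>) * cmod (G x))\<^sup>2)"
  shows "expint b G"
  unfolding expint_def
proof (intro conjI allI impI meas)
  fix n and c :: real assume "c < b"
  define e where "e = (b - c) / 2"
  have e: "e > 0" using \<open>c < b\<close> by (simp add: e_def)
  define K where "K = fact n / e ^ n * exp e"
  have "integrable lborel (\<lambda>x. K * ((exp (b * \<bar>x\<bar>) * cmod (G x))\<^sup>2 + exp (- (2 * e) * \<bar>x\<bar>)))"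
    using int integrable_exp_abs[of "2 * e"] e by auto
  then show "integrable lborel (\<lambda>x. (1 + \<bar>x\<bar>) ^ n * exp (c * \<bar>x\<bar>) * cmod (G x))"
  proof (rule Bochner_Integration.integrable_bound)
    show "(\<lambda>x. (1 + \<bar>x\<bar>) ^ n * exp (c * \<bar>x\<bar>) * cmod (G x)) \<in> borel_measurable lborel"
      using meas by measurable
    show "AE x in lborel. norm ((1 + \<bar>x\<bar>) ^ n * exp (c * \<bar>x\<bar>) * cmod (G x))
       \<le> norm (K * ((exp (b * \<bar>x\<bar>) * cmod (G x))\<^sup>2 + exp (- (2 * e) * \<bar>x\<bar>)))"
    proof (rule AE_I2)
      fix x :: real
      have p: "(1 + \<bar>x\<bar>) ^ n \<le> fact n / e ^ n * exp (e * (1 + \<bar>x\<bar>))"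
        by (rule pow_le_exp_scaled) (use e in auto)
      have "(1 + \<bar>x\<bar>) ^ n * exp (c * \<bar>x\<bar>) * cmod (G x) \<le>
          fact n / e ^ n * exp (e * (1 + \<bar>x\<bar>)) * exp (c * \<bar>x\<bar>) * cmod (G x)"
        by (intro mult_right_mono p) auto
      also have "\<dots> = K * ((exp (b * \<bar>x\<bar>) * cmod (G x)) * exp (- e * \<bar>x\<bar>))"
        by (simp add: K_def e_def algebra_simps flip: exp_add) (simp add: field_simps)
      also have "\<dots> \<le> K * ((exp (b * \<bar>x\<bar>) * cmod (G x))\<^sup>2 + exp (- (2 * e) * \<bar>x\<bar>))"
      proof (rule mult_left_mono)
        have "exp (- (2 * e) * \<bar>x\<bar>) = (exp (- e * \<bar>x\<bar>))\<^sup>2"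
          by (simp add: power2_eq_square flip: exp_add)
        moreover have "u * v \<le> u\<^sup>2 + v\<^sup>2" if "u \<ge> 0" "v \<ge> 0" for u v :: real
        proof -
          have "0 \<le> (u - v)\<^sup>2" by simp
          moreover have "0 \<le> u * v" using that by simp
          ultimately show ?thesis by (simp add: power2_diff)
        qed
        ultimately show "exp (b * \<bar>x\<bar>) * cmod (G x) * exp (- e * \<bar>x\<bar>) \<le> (exp (b * \<bar>x\<bar>) * cmod (G x))\<^sup>2 + exp (- (2 * e) * \<bar>x\<bar>)"
          by simp
        show "0 \<le> K" using e by (simp add: K_def)
      qed
      finally show "norm ((1 + \<bar>x\<bar>) ^ n * exp (c * \<bar>x\<bar>) * cmod (G x))
       \<le> norm (K * ((exp (b * \<bar>x\<bar>) * cmod (G x))\<^sup>2 + exp (- (2 * e) * \<bar>x\<bar>)))"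
        using e by (simp add: K_def)
    qed
  qed
qed

lemma expint_integrable:
  assumes "expint b G" "c < b" "continuous_on UNIV h"
    and "\<And>x. cmod (h x) \<le> K * (1 + \<bar>x\<bar>) ^ n * exp (c * \<bar>x\<bar>)"
  shows "integrable lborel (\<lambda>x. h x * G x)"
proof -
  have "integrable lborel (\<lambda>x. K * ((1 + \<bar>x\<bar>) ^ n * exp (c * \<bar>x\<bar>) * cmod (G x)))"
    using assms(1,2) unfolding expint_def by auto
  then show ?thesis
  proof (rule Bochner_Integration.integrable_bound)
    have "h \<in> borel_measurable borel" by (rule borel_measurable_continuous_onI[OF assms(3)])
    moreover have "G \<in> borel_measurable borel"
      using assms(1) unfolding expint_def by simp
    ultimately show "(\<lambda>x. h x * G x) \<in> borel_measurable lborel"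
      by simp
    show "AE x in lborel. norm (h x * G x) \<le> norm (K * ((1 + \<bar>x\<bar>) ^ n * exp (c * \<bar>x\<bar>) * cmod (G x)))"
    proof (rule AE_I2)
      fix x
      have "norm (h x * G x) \<le> K * (1 + \<bar>x\<bar>) ^ n * exp (c * \<bar>x\<bar>) * cmod (G x)"
        by (simp add: norm_mult mult_right_mono assms(4))
      also have "\<dots> \<le> norm (K * ((1 + \<bar>x\<bar>) ^ n * exp (c * \<bar>x\<bar>) * cmod (G x)))"
        by (simp add: mult.assoc)
      finally show "norm (h x * G x) \<le> norm (K * ((1 + \<bar>x\<bar>) ^ n * exp (c * \<bar>x\<bar>) * cmod (G x)))" .
    qed
  qed
qed


lemma Re_entire_deriv:
  assumes "W holomorphic_on UNIV"
  shows "((\<lambda>x. Re (W (of_real x))) has_real_derivative Re (deriv W (of_real x))) (at x)"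
    and "((\<lambda>x. Im (W (of_real x))) has_real_derivative Im (deriv W (of_real x))) (at x)"
proof -
  have "(W has_field_derivative deriv W (of_real x)) (at (of_real x))"
    using holomorphic_derivI[OF assms] by auto
  then have "((\<lambda>x. W (of_real x)) has_vector_derivative deriv W (of_real x)) (at x)"
    by (rule has_vector_derivative_real_field)
  then show "((\<lambda>x. Re (W (of_real x))) has_real_derivative Re (deriv W (of_real x))) (at x)"
    and "((\<lambda>x. Im (W (of_real x))) has_real_derivative Im (deriv W (of_real x))) (at x)"
    by (auto intro: has_field_derivative_Re has_field_derivative_Im)
qed

lemma su_Re_entire: "W holomorphic_on UNIV \<Longrightarrow> su n (\<lambda>x. Re (W (of_real x)))"
proof (induction n arbitrary: W)
  case 0 then show ?case using Re_entire_deriv(1) real_differentiable_def by auto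
next
  case (Suc n)
  have "deriv (\<lambda>x. Re (W (of_real x))) = (\<lambda>x. Re (deriv W (of_real x)))"
    using Re_entire_deriv(1)[OF Suc.prems] DERIV_imp_deriv by blast
  moreover have "deriv W holomorphic_on UNIV" using Suc.prems by (simp add: holomorphic_deriv)
  ultimately show ?case using Suc Re_entire_deriv(1) real_differentiable_def by auto
qed

lemma su_Im_entire: "W holomorphic_on UNIV \<Longrightarrow> su n (\<lambda>x. Im (W (of_real x)))"
proof (induction n arbitrary: W)
  case 0 then show ?case using Re_entire_deriv(2) real_differentiable_def by auto
next
  case (Suc n)
  have "deriv (\<lambda>x. Im (W (of_real x))) = (\<lambda>x. Im (deriv W (of_real x)))"
    using Re_entire_deriv(2)[OF Suc.prems] DERIV_imp_deriv by blast
  moreover have "deriv W holomorphic_on UNIV" using Suc.prems by (simp add: holomorphic_deriv)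
  ultimately show ?case using Suc Re_entire_deriv(2) real_differentiable_def by auto
qed

definition Ef :: "complex \<Rightarrow> complex \<Rightarrow> complex" where
  "Ef z w = exp (- (\<i> * z * w))"

definition Wf :: "nat \<Rightarrow> complex \<Rightarrow> complex \<Rightarrow> complex" where
  "Wf j z w = w ^ j * Ef z w"

definition dW :: "nat \<Rightarrow> complex \<Rightarrow> complex \<Rightarrow> complex" where
  "dW j z w = (of_nat j * w ^ (j - 1) - \<i> * z * w ^ j) * Ef z w"

lemma Wf_deriv: "(Wf j z has_field_derivative dW j z w) (at w)"
  unfolding Wf_def[abs_def] dW_def Ef_def
  by (auto intro!: derivative_eq_intros simp: algebra_simps)

lemma Wf_holo: "Wf j z holomorphic_on UNIV"
  using Wf_deriv holomorphic_on_def field_differentiable_def by blast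

lemma deriv_Wf: "deriv (Wf j z) = dW j z"
  using Wf_deriv DERIV_imp_deriv by blast

lemma norm_Ef: "cmod (Ef z (of_real x)) \<le> exp (\<bar>Im z\<bar> * \<bar>x\<bar>)"
proof -
  have "cmod (Ef z (of_real x)) = exp (Im z * x)" by (simp add: Ef_def)
  also have "\<dots> \<le> exp (\<bar>Im z\<bar> * \<bar>x\<bar>)" by (simp add: abs_mult[symmetric])
  finally show ?thesis .
qed

lemma norm_Wf: "cmod (Wf j z (of_real x)) \<le> (cmod z + j + 1) * (1 + \<bar>x\<bar>) ^ j * exp (\<bar>Im z\<bar> * \<bar>x\<bar>)"
proof -
  have "cmod (Wf j z (of_real x)) \<le> \<bar>x\<bar> ^ j * exp (\<bar>Im z\<bar> * \<bar>x\<bar>)"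
    unfolding Wf_def by (simp add: norm_mult norm_power mult_left_mono norm_Ef)
  also have "\<dots> \<le> 1 * (1 + \<bar>x\<bar>) ^ j * exp (\<bar>Im z\<bar> * \<bar>x\<bar>)"
    using power_mono[of "\<bar>x\<bar>" "1 + \<bar>x\<bar>" j] by (intro mult_right_mono) auto
  also have "\<dots> \<le> (cmod z + j + 1) * (1 + \<bar>x\<bar>) ^ j * exp (\<bar>Im z\<bar> * \<bar>x\<bar>)"
    by (intro mult_right_mono) auto
  finally show ?thesis .
qed

lemma norm_dW: "cmod (dW j z (of_real x)) \<le> (cmod z + j + 1) * (1 + \<bar>x\<bar>) ^ j * exp (\<bar>Im z\<bar> * \<bar>x\<bar>)"
proof -
  have a: "\<bar>x\<bar> ^ (j - 1) \<le> (1 + \<bar>x\<bar>) ^ j"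
  proof -
    have "\<bar>x\<bar> ^ (j - 1) \<le> (1 + \<bar>x\<bar>) ^ (j - 1)" by (intro power_mono) auto
    also have "\<dots> \<le> (1 + \<bar>x\<bar>) ^ j" by (intro power_increasing) auto
    finally show ?thesis .
  qed
  have b: "\<bar>x\<bar> ^ j \<le> (1 + \<bar>x\<bar>) ^ j" by (intro power_mono) auto
  have "cmod (of_nat j * (of_real x) ^ (j - 1) - \<i> * z * (of_real x) ^ j) \<le> j * \<bar>x\<bar> ^ (j - 1) + cmod z * \<bar>x\<bar> ^ j"
    by (rule order_trans[OF norm_triangle_ineq4]) (simp add: norm_mult norm_power)
  also have "\<dots> \<le> j * (1 + \<bar>x\<bar>) ^ j + cmod z * (1 + \<bar>x\<bar>) ^ j"
    by (intro add_mono mult_left_mono a b) auto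
  also have "\<dots> \<le> (cmod z + j + 1) * (1 + \<bar>x\<bar>) ^ j" by (simp add: algebra_simps)
  finally have c: "cmod (of_nat j * (of_real x) ^ (j - 1) - \<i> * z * (of_real x) ^ j) \<le> (cmod z + j + 1) * (1 + \<bar>x\<bar>) ^ j" .
  show ?thesis unfolding dW_def norm_mult
    by (rule mult_mono[OF c norm_Ef]) auto
qed

lemma cont_Wf: "continuous_on UNIV (\<lambda>x::real. Wf j z (of_real x))"
  unfolding Wf_def Ef_def by (intro continuous_intros)

lemma cont_dW: "continuous_on UNIV (\<lambda>x::real. dW j z (of_real x))"
  unfolding dW_def Ef_def by (intro continuous_intros)


lemma chi_cont: "continuous_on UNIV chi" "continuous_on UNIV (deriv chi)"
proof -
  have "\<forall>x. chi differentiable (at x)" "\<forall>x. deriv chi differentiable (at x)"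
    using su_chi[of 1] by auto
  then show "continuous_on UNIV chi" "continuous_on UNIV (deriv chi)"
    by (meson continuous_at_imp_continuous_on differentiable_imp_continuous_within)+
qed

lemma int_aux:
  assumes "expint B a" "c < B" "continuous_on UNIV f"
    and "\<And>x. cmod (f x) \<le> K * (1 + \<bar>x\<bar>) ^ n * exp (c * \<bar>x\<bar>)"
  shows "integrable lborel (\<lambda>x. a x * f x)"
    "integrable lborel (\<lambda>x. a x * of_real (Re (f x)))"
    "integrable lborel (\<lambda>x. a x * of_real (Im (f x)))"
proof -
  have "integrable lborel (\<lambda>x. f x * a x)"
    by (rule expint_integrable[OF assms])
  then show "integrable lborel (\<lambda>x. a x * f x)" by (simp add: mult.commute)
  have "integrable lborel (\<lambda>x. of_real (Re (f x)) * a x)"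
    by (rule expint_integrable[OF assms(1,2), where K=K and n=n])
      (auto intro!: continuous_intros assms(3) intro: order_trans[OF _ assms(4)] abs_Re_le_cmod)
  then show "integrable lborel (\<lambda>x. a x * of_real (Re (f x)))" by (simp add: mult.commute)
  have "integrable lborel (\<lambda>x. of_real (Im (f x)) * a x)"
    by (rule expint_integrable[OF assms(1,2), where K=K and n=n])
      (auto intro!: continuous_intros assms(3) intro: order_trans[OF _ assms(4)] abs_Im_le_cmod)
  then show "integrable lborel (\<lambda>x. a x * of_real (Im (f x)))" by (simp add: mult.commute)
qed

lemma integral_split_ReIm:
  fixes a f :: "real \<Rightarrow> complex"
  assumes "integrable lborel (\<lambda>x. a x * of_real (Re (f x)))"
    "integrable lborel (\<lambda>x. a x * of_real (Im (f x)))"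
  shows "(LINT x|lborel. a x * f x) = (LINT x|lborel. a x * of_real (Re (f x))) + \<i> * (LINT x|lborel. a x * of_real (Im (f x)))"
proof -
  have "(LINT x|lborel. a x * f x) = (LINT x|lborel. a x * of_real (Re (f x)) + \<i> * (a x * of_real (Im (f x))))"
    by (rule Bochner_Integration.integral_cong) (auto simp: algebra_simps complex_eq_iff)
  also have "\<dots> = (LINT x|lborel. a x * of_real (Re (f x))) + (LINT x|lborel. \<i> * (a x * of_real (Im (f x))))"
    by (rule Bochner_Integration.integral_add) (use assms in auto)
  finally show ?thesis by simp
qed

lemma ibp_ext:
  fixes a bb :: "real \<Rightarrow> complex"
  assumes ea: "expint B a" and eb: "expint B bb"
    and hyp: "\<And>\<phi>. test_function \<phi> \<Longrightarrow>
      (LINT x|lborel. a x * of_real (deriv \<phi> x)) = - (LINT x|lborel. bb x * of_real (\<phi> x))"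
    and z: "\<bar>Im z\<bar> < B"
  shows "(LINT x|lborel. a x * dW j z (of_real x)) = - (LINT x|lborel. bb x * Wf j z (of_real x))"
proof -
  define w where "w x = Wf j z (of_real x)" for x
  define w' where "w' x = dW j z (of_real x)" for x
  define u where "u x = Re (w x)" for x
  define v where "v x = Im (w x)" for x
  define c where "c = \<bar>Im z\<bar>"
  define K0 where "K0 = cmod z + j + 1"
  have cB: "c < B" using z by (simp add: c_def)
  have su_u: "su n u" for n unfolding u_def w_def by (rule su_Re_entire[OF Wf_holo])
  have su_v: "su n v" for n unfolding v_def w_def by (rule su_Im_entire[OF Wf_holo])
  have du: "deriv u x = Re (w' x)" for x
    using Re_entire_deriv(1)[OF Wf_holo, of j z x] unfolding u_def w_def w'_def deriv_Wf
    by (rule DERIV_imp_deriv)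
  have dv: "deriv v x = Im (w' x)" for x
    using Re_entire_deriv(2)[OF Wf_holo, of j z x] unfolding v_def w_def w'_def deriv_Wf
    by (rule DERIV_imp_deriv)
  obtain M where M: "\<And>x. \<bar>chi x\<bar> \<le> M \<and> \<bar>deriv chi x\<bar> \<le> M" using chi_bounded by blast
  have hpos: "0 \<le> K0 * (1 + \<bar>x\<bar>) ^ j * exp (c * \<bar>x\<bar>)" for x
    unfolding K0_def by (intro mult_nonneg_nonneg) auto
  have M0: "M \<ge> 0" using M[of 0] abs_ge_zero[of "chi 0"] by linarith
  have nw: "cmod (w x) \<le> K0 * (1 + \<bar>x\<bar>) ^ j * exp (c * \<bar>x\<bar>)" for x
    unfolding w_def K0_def c_def using norm_Wf .
  have nw': "cmod (w' x) \<le> K0 * (1 + \<bar>x\<bar>) ^ j * exp (c * \<bar>x\<bar>)" for x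
    unfolding w'_def K0_def c_def using norm_dW .
  have cw: "continuous_on UNIV w" unfolding w_def using cont_Wf .
  have cw': "continuous_on UNIV w'" unfolding w'_def using cont_dW .
  define cut where "cut R x = w' x * of_real (chi (x / R)) + w x * of_real (deriv chi (x / R) / R)" for R x
  define cw0 where "cw0 R x = w x * of_real (chi (x / R))" for R x
  have ncut: "cmod (cut R x) \<le> (2 * M * K0) * (1 + \<bar>x\<bar>) ^ j * exp (c * \<bar>x\<bar>)" if "R \<ge> 1" for R x
  proof -
    have "cmod (cut R x) \<le> cmod (w' x) * \<bar>chi (x / R)\<bar> + cmod (w x) * (\<bar>deriv chi (x / R)\<bar> / R)"
      unfolding cut_def using that
      by (rule_tac order_trans[OF norm_triangle_ineq]) (simp add: norm_mult norm_divide)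
    also have "\<dots> \<le> (K0 * (1 + \<bar>x\<bar>) ^ j * exp (c * \<bar>x\<bar>)) * M + (K0 * (1 + \<bar>x\<bar>) ^ j * exp (c * \<bar>x\<bar>)) * M"
    proof (intro add_mono mult_mono nw nw')
      show "\<bar>chi (x / R)\<bar> \<le> M" using M by blast
      have "\<bar>deriv chi (x / R)\<bar> / R \<le> \<bar>deriv chi (x / R)\<bar>"
        using that by (simp add: divide_le_eq mult_le_cancel_left1 abs_of_nonneg)
      then show "\<bar>deriv chi (x / R)\<bar> / R \<le> M" using M by (meson order_trans)
    qed (use M0 that hpos in auto)
    finally show ?thesis by (simp add: algebra_simps)
  qed
  have ncw0: "cmod (cw0 R x) \<le> (2 * M * K0) * (1 + \<bar>x\<bar>) ^ j * exp (c * \<bar>x\<bar>)" for R x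
  proof -
    have "cmod (cw0 R x) \<le> (K0 * (1 + \<bar>x\<bar>) ^ j * exp (c * \<bar>x\<bar>)) * M"
      unfolding cw0_def norm_mult using M hpos by (intro mult_mono nw) auto
    also have "\<dots> \<le> (2 * M * K0) * (1 + \<bar>x\<bar>) ^ j * exp (c * \<bar>x\<bar>)"
      using M0 by (simp add: algebra_simps mult_left_mono mult_right_mono K0_def)
    finally show ?thesis .
  qed
  have ccut: "continuous_on UNIV (cut R)" if "R \<ge> 1" for R
    unfolding cut_def using that
    by (intro continuous_intros cw cw' continuous_on_compose2[OF chi_cont(1)]
        continuous_on_compose2[OF chi_cont(2)]) auto
  have ccw0: "continuous_on UNIV (cw0 R)" if "R \<ge> 1" for R
    unfolding cw0_def using that
    by (intro continuous_intros cw continuous_on_compose2[OF chi_cont(1)]) auto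
  have ident: "(LINT x|lborel. a x * cut R x) = - (LINT x|lborel. bb x * cw0 R x)" if R: "R \<ge> 1" for R
  proof -
    have R0: "R > 0" using R by simp
    have tu: "test_function (\<lambda>x. u x * chi (x / R))" by (rule test_function_cut[OF su_u R0])
    have tv: "test_function (\<lambda>x. v x * chi (x / R))" by (rule test_function_cut[OF su_v R0])
    have dcu: "deriv (\<lambda>x. u x * chi (x / R)) x = Re (cut R x)" for x
    proof -
      have "deriv (\<lambda>x. u x * chi (x / R)) x = deriv u x * chi (x / R) + u x * (deriv chi (x / R) / R)"
        by (rule deriv_cut[OF su_u R0])
      also have "\<dots> = Re (cut R x)" by (simp add: cut_def du u_def)
      finally show ?thesis .
    qed
    have dcv: "deriv (\<lambda>x. v x * chi (x / R)) x = Im (cut R x)" for x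
    proof -
      have "deriv (\<lambda>x. v x * chi (x / R)) x = deriv v x * chi (x / R) + v x * (deriv chi (x / R) / R)"
        by (rule deriv_cut[OF su_v R0])
      also have "\<dots> = Im (cut R x)" by (simp add: cut_def dv v_def)
      finally show ?thesis .
    qed
    have cu: "u x * chi (x / R) = Re (cw0 R x)" for x unfolding cw0_def u_def by simp
    have cv: "v x * chi (x / R) = Im (cw0 R x)" for x unfolding cw0_def v_def by simp
    note ia = int_aux[OF ea cB ccut[OF R] ncut[OF R]]
    note ib = int_aux[OF eb cB ccw0[OF R] ncw0]
    have "(LINT x|lborel. a x * cut R x) = (LINT x|lborel. a x * of_real (Re (cut R x))) + \<i> * (LINT x|lborel. a x * of_real (Im (cut R x)))"
      by (rule integral_split_ReIm[OF ia(2,3)])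
    also have "\<dots> = - (LINT x|lborel. bb x * of_real (Re (cw0 R x))) + \<i> * - (LINT x|lborel. bb x * of_real (Im (cw0 R x)))"
    proof -
      have tu': "test_function (\<lambda>x. Re (cw0 R x))" using tu by (simp add: cu)
      have tv': "test_function (\<lambda>x. Im (cw0 R x))" using tv by (simp add: cv)
      have dcu': "deriv (\<lambda>x. Re (cw0 R x)) x = Re (cut R x)" for x using dcu[of x] by (simp add: cu)
      have dcv': "deriv (\<lambda>x. Im (cw0 R x)) x = Im (cut R x)" for x using dcv[of x] by (simp add: cv)
      show ?thesis using hyp[OF tu'] hyp[OF tv'] by (simp only: dcu' dcv')
    qed
    also have "\<dots> = - (LINT x|lborel. bb x * cw0 R x)"
      using integral_split_ReIm[OF ib(2,3)] by (simp add: algebra_simps)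
    finally show ?thesis .
  qed
  have Rn: "real (Suc n) \<ge> 1" for n by simp
  have infS: "filterlim (\<lambda>n. real (Suc n)) at_infinity sequentially"
    by (rule filterlim_at_top_imp_at_infinity filterlim_compose[OF filterlim_real_sequentially filterlim_Suc])+
  have lim0: "(\<lambda>n. x / real (Suc n)) \<longlonglongrightarrow> 0" for x
    by (rule tendsto_divide_0[OF tendsto_const infS])
  have chilim: "(\<lambda>n. chi (x / real (Suc n))) \<longlonglongrightarrow> 1" for x
  proof -
    have "isCont chi 0" using chi_cont(1) by (simp add: continuous_on_eq_continuous_at)
    then show ?thesis using isCont_tendsto_compose[OF _ lim0[of x]] chi_0 by fastforce
  qed
  have dchilim: "(\<lambda>n. deriv chi (x / real (Suc n)) / real (Suc n)) \<longlonglongrightarrow> 0" for x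
  proof (rule Lim_null_comparison)
    show "\<forall>\<^sub>F n in sequentially. norm (deriv chi (x / real (Suc n)) / real (Suc n)) \<le> M / real (Suc n)"
    proof (rule always_eventually, rule allI)
      fix n
      have "\<bar>deriv chi (x / real (Suc n))\<bar> \<le> M" using M by blast
      then show "norm (deriv chi (x / real (Suc n)) / real (Suc n)) \<le> M / real (Suc n)"
        by (simp add: divide_right_mono)
    qed
    show "(\<lambda>n. M / real (Suc n)) \<longlonglongrightarrow> 0"
      by (rule tendsto_divide_0[OF tendsto_const infS])
  qed
  have dom: "integrable lborel (\<lambda>x. (2 * M * K0) * ((1 + \<bar>x\<bar>) ^ j * exp (c * \<bar>x\<bar>) * cmod (g x)))"
    if "expint B g" for g
    using that cB unfolding expint_def by auto
  have L1: "(\<lambda>n. LINT x|lborel. a x * cut (real (Suc n)) x) \<longlonglongrightarrow> (LINT x|lborel. a x * w' x)"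
  proof (rule integral_dominated_convergence)
    show "(\<lambda>x. a x * w' x) \<in> borel_measurable lborel"
      using int_aux(1)[OF ea cB cw' nw'] by auto
    show "(\<lambda>x. a x * cut (real (Suc n)) x) \<in> borel_measurable lborel" for n
      using int_aux(1)[OF ea cB ccut[OF Rn] ncut[OF Rn]] by auto
    show "integrable lborel (\<lambda>x. (2 * M * K0) * ((1 + \<bar>x\<bar>) ^ j * exp (c * \<bar>x\<bar>) * cmod (a x)))"
      by (rule dom[OF ea])
    show "AE x in lborel. (\<lambda>n. a x * cut (real (Suc n)) x) \<longlonglongrightarrow> a x * w' x"
    proof (rule AE_I2)
      fix x
      have "(\<lambda>n. a x * (w' x * of_real (chi (x / real (Suc n))) + w x * of_real (deriv chi (x / real (Suc n)) / real (Suc n))))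
         \<longlonglongrightarrow> a x * (w' x * of_real 1 + w x * of_real 0)"
        by (intro tendsto_intros chilim dchilim)
      then show "(\<lambda>n. a x * cut (real (Suc n)) x) \<longlonglongrightarrow> a x * w' x" by (simp add: cut_def)
    qed
    show "AE x in lborel. norm (a x * cut (real (Suc n)) x) \<le> (2 * M * K0) * ((1 + \<bar>x\<bar>) ^ j * exp (c * \<bar>x\<bar>) * cmod (a x))" for n
    proof (rule AE_I2)
      fix x
      show "norm (a x * cut (real (Suc n)) x) \<le> (2 * M * K0) * ((1 + \<bar>x\<bar>) ^ j * exp (c * \<bar>x\<bar>) * cmod (a x))"
      proof -
        have "norm (a x * cut (real (Suc n)) x) = cmod (a x) * cmod (cut (real (Suc n)) x)" by (simp add: norm_mult)
        also have "\<dots> \<le> cmod (a x) * ((2 * M * K0) * (1 + \<bar>x\<bar>) ^ j * exp (c * \<bar>x\<bar>))"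
          by (rule mult_left_mono[OF ncut[OF Rn]]) simp
        also have "\<dots> = (2 * M * K0) * ((1 + \<bar>x\<bar>) ^ j * exp (c * \<bar>x\<bar>) * cmod (a x))" by (simp only: ac_simps)
        finally show ?thesis .
      qed
    qed
  qed
  have L2: "(\<lambda>n. LINT x|lborel. bb x * cw0 (real (Suc n)) x) \<longlonglongrightarrow> (LINT x|lborel. bb x * w x)"
  proof (rule integral_dominated_convergence)
    show "(\<lambda>x. bb x * w x) \<in> borel_measurable lborel"
      using int_aux(1)[OF eb cB cw nw] by auto
    show "(\<lambda>x. bb x * cw0 (real (Suc n)) x) \<in> borel_measurable lborel" for n
      using int_aux(1)[OF eb cB ccw0[OF Rn] ncw0] by auto
    show "integrable lborel (\<lambda>x. (2 * M * K0) * ((1 + \<bar>x\<bar>) ^ j * exp (c * \<bar>x\<bar>) * cmod (bb x)))"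
      by (rule dom[OF eb])
    show "AE x in lborel. (\<lambda>n. bb x * cw0 (real (Suc n)) x) \<longlonglongrightarrow> bb x * w x"
    proof (rule AE_I2)
      fix x
      have "(\<lambda>n. bb x * (w x * of_real (chi (x / real (Suc n))))) \<longlonglongrightarrow> bb x * (w x * of_real 1)"
        by (intro tendsto_intros chilim)
      then show "(\<lambda>n. bb x * cw0 (real (Suc n)) x) \<longlonglongrightarrow> bb x * w x" by (simp add: cw0_def)
    qed
    show "AE x in lborel. norm (bb x * cw0 (real (Suc n)) x) \<le> (2 * M * K0) * ((1 + \<bar>x\<bar>) ^ j * exp (c * \<bar>x\<bar>) * cmod (bb x))" for n
    proof (rule AE_I2)
      fix x
      show "norm (bb x * cw0 (real (Suc n)) x) \<le> (2 * M * K0) * ((1 + \<bar>x\<bar>) ^ j * exp (c * \<bar>x\<bar>) * cmod (bb x))"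
      proof -
        have "norm (bb x * cw0 (real (Suc n)) x) = cmod (bb x) * cmod (cw0 (real (Suc n)) x)" by (simp add: norm_mult)
        also have "\<dots> \<le> cmod (bb x) * ((2 * M * K0) * (1 + \<bar>x\<bar>) ^ j * exp (c * \<bar>x\<bar>))"
          by (rule mult_left_mono[OF ncw0]) simp
        also have "\<dots> = (2 * M * K0) * ((1 + \<bar>x\<bar>) ^ j * exp (c * \<bar>x\<bar>) * cmod (bb x))" by (simp only: ac_simps)
        finally show ?thesis .
      qed
    qed
  qed
  have "(\<lambda>n. LINT x|lborel. a x * cut (real (Suc n)) x) \<longlonglongrightarrow> - (LINT x|lborel. bb x * w x)"
    using tendsto_minus[OF L2] ident[OF Rn] by simp
  with L1 have "(LINT x|lborel. a x * w' x) = - (LINT x|lborel. bb x * w x)"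
    using LIMSEQ_unique by blast
  then show ?thesis by (simp add: w_def w'_def)
qed


lemma exp_remainder:
  fixes t :: complex
  shows "cmod (exp t - (\<Sum>k<m. t ^ k /\<^sub>R fact k)) \<le> cmod t ^ m * exp (cmod t)"
proof -
  define f where "f n = t ^ n /\<^sub>R fact n" for n
  have sf: "summable f" unfolding f_def by (rule summable_exp_generic)
  have "exp t = suminf f" by (simp add: exp_def f_def[abs_def])
  then have e: "exp t - sum f {..<m} = (\<Sum>n. f (n + m))"
    using suminf_split_initial_segment[OF sf, of m] by simp
  define g where "g n = cmod t ^ n /\<^sub>R fact n" for n
  have sg: "summable g" unfolding g_def by (rule summable_exp_generic)
  have nf: "norm (f n) = g n" for n by (simp add: f_def g_def norm_power)
  have snf: "summable (\<lambda>n. norm (f (n + m)))" using sg by (simp add: nf)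
  have "norm (\<Sum>n. f (n + m)) \<le> (\<Sum>n. norm (f (n + m)))" by (rule summable_norm[OF snf])
  also have "\<dots> \<le> (\<Sum>n. cmod t ^ m * g n)"
  proof (rule suminf_le)
    fix n
    have "fact n \<le> (fact (n + m) :: real)" by (intro fact_mono) simp
    then have "cmod t ^ (n + m) / fact (n + m) \<le> cmod t ^ (n + m) / fact n"
      by (intro divide_left_mono) auto
    then show "norm (f (n + m)) \<le> cmod t ^ m * g n"
      by (simp add: nf g_def power_add divide_inverse mult_ac)
  next
    show "summable (\<lambda>n. norm (f (n + m)))" by (rule snf)
    show "summable (\<lambda>n. cmod t ^ m * g n)" by (rule summable_mult[OF sg])
  qed
  also have "\<dots> = cmod t ^ m * (\<Sum>n. g n)" by (rule suminf_mult[OF sg])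
  also have "(\<Sum>n. g n) = exp (cmod t)" by (simp add: exp_def g_def)
  finally have "norm (exp t - sum f {..<m}) \<le> cmod t ^ m * exp (cmod t)" using e by simp
  then show ?thesis by (simp add: f_def)
qed

definition c0 :: complex where "c0 = of_real (1 / sqrt (2 * pi))"

definition Fi :: "(real \<Rightarrow> complex) \<Rightarrow> nat \<Rightarrow> complex \<Rightarrow> real \<Rightarrow> complex" where
  "Fi \<psi> n z x = ((- \<i> * of_real x) ^ n * Ef z (of_real x)) * \<psi> x"

definition Fn :: "(real \<Rightarrow> complex) \<Rightarrow> nat \<Rightarrow> complex \<Rightarrow> complex" where
  "Fn \<psi> n z = c0 * (LINT x|lborel. Fi \<psi> n z x)"

lemma Fi_bound: "\<bar>Im z\<bar> \<le> c \<Longrightarrow> cmod ((- \<i> * of_real x) ^ n * Ef z (of_real x)) \<le> 1 * (1 + \<bar>x\<bar>) ^ n * exp (c * \<bar>x\<bar>)"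
proof -
  assume "\<bar>Im z\<bar> \<le> c"
  have "cmod ((- \<i> * of_real x) ^ n * Ef z (of_real x)) \<le> \<bar>x\<bar> ^ n * exp (\<bar>Im z\<bar> * \<bar>x\<bar>)"
    by (simp add: norm_mult norm_power mult_left_mono norm_Ef)
  also have "\<dots> \<le> (1 + \<bar>x\<bar>) ^ n * exp (c * \<bar>x\<bar>)"
    using \<open>\<bar>Im z\<bar> \<le> c\<close> power_mono[of "\<bar>x\<bar>" "1 + \<bar>x\<bar>" n]
    by (intro mult_mono) (auto intro: mult_right_mono)
  finally show ?thesis by simp
qed

lemma Fi_integrable:
  assumes "expint b \<psi>" "\<bar>Im z\<bar> \<le> c" "c < b"
  shows "integrable lborel (Fi \<psi> n z)"
proof -
  have "continuous_on UNIV (\<lambda>x. (- \<i> * of_real x) ^ n * Ef z (of_real x))"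
    unfolding Ef_def by (intro continuous_intros)
  then show ?thesis unfolding Fi_def[abs_def]
    by (rule expint_integrable[OF assms(1,3), where K=1 and n=n]) (rule Fi_bound[OF assms(2)])
qed

lemma Fn_bound:
  assumes "expint b \<psi>" "\<bar>Im z\<bar> \<le> c" "c < b"
  shows "cmod (Fn \<psi> n z) \<le> (LINT x|lborel. (1 + \<bar>x\<bar>) ^ n * exp (c * \<bar>x\<bar>) * cmod (\<psi> x))"
proof -
  have i: "integrable lborel (\<lambda>x. (1 + \<bar>x\<bar>) ^ n * exp (c * \<bar>x\<bar>) * cmod (\<psi> x))"
    using assms unfolding expint_def by auto
  have "cmod (LINT x|lborel. Fi \<psi> n z x) \<le> (LINT x|lborel. (1 + \<bar>x\<bar>) ^ n * exp (c * \<bar>x\<bar>) * cmod (\<psi> x))"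
  proof (rule Bochner_Integration.integral_norm_bound_integral[OF Fi_integrable[OF assms] i])
    fix x
    show "norm (Fi \<psi> n z x) \<le> (1 + \<bar>x\<bar>) ^ n * exp (c * \<bar>x\<bar>) * cmod (\<psi> x)"
    proof -
      have "norm (Fi \<psi> n z x) = cmod ((- \<i> * of_real x) ^ n * Ef z (of_real x)) * cmod (\<psi> x)"
        unfolding Fi_def by (rule norm_mult)
      then show ?thesis using Fi_bound[OF assms(2), of x n] by (simp add: mult_right_mono)
    qed
  qed
  moreover have "cmod c0 \<le> 1"
  proof -
    have "1 \<le> sqrt (2 * pi)" using pi_gt3 by (intro real_le_rsqrt) simp
    then show ?thesis unfolding c0_def norm_of_real by simp
  qed
  moreover have "0 \<le> (LINT x|lborel. (1 + \<bar>x\<bar>) ^ n * exp (c * \<bar>x\<bar>) * cmod (\<psi> x))"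
    by (intro integral_nonneg_AE) auto
  ultimately show ?thesis unfolding Fn_def norm_mult
    using mult_mono[of "cmod c0" 1 "cmod (LINT x|lborel. Fi \<psi> n z x)"] by simp
qed

lemma norm_Ef_le: "\<bar>Im z\<bar> \<le> c \<Longrightarrow> cmod (Ef z (of_real x)) \<le> exp (c * \<bar>x\<bar>)"
proof -
  assume "\<bar>Im z\<bar> \<le> c"
  then have "exp (\<bar>Im z\<bar> * \<bar>x\<bar>) \<le> exp (c * \<bar>x\<bar>)" by (simp add: mult_right_mono)
  then show ?thesis using norm_Ef[of z x] by linarith
qed

lemma Fi_diff_bound:
  assumes "\<bar>Im z\<bar> \<le> c1" "cmod (w - z) \<le> d" "d \<ge> 0"
  shows "cmod (Fi \<psi> n w x - Fi \<psi> n z x - (w - z) * Fi \<psi> (Suc n) z x)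
     \<le> cmod (w - z) ^ 2 * ((1 + \<bar>x\<bar>) ^ (n + 2) * exp ((c1 + d) * \<bar>x\<bar>) * cmod (\<psi> x))"
proof -
  define t where "t = - \<i> * (w - z) * of_real x"
  have Ew: "Ef w (of_real x) = Ef z (of_real x) * exp t"
    unfolding Ef_def t_def by (simp flip: exp_add add: algebra_simps)
  have eq: "Fi \<psi> n w x - Fi \<psi> n z x - (w - z) * Fi \<psi> (Suc n) z x
      = (- \<i> * of_real x) ^ n * Ef z (of_real x) * (exp t - 1 - t) * \<psi> x"
    unfolding Fi_def Ew t_def by (simp add: algebra_simps)
  have r: "cmod (exp t - 1 - t) \<le> cmod t ^ 2 * exp (cmod t)"
    using exp_remainder[of t 2] by (simp add: numeral_2_eq_2 diff_diff_eq)
  have nt: "cmod t = cmod (w - z) * \<bar>x\<bar>" by (simp add: t_def norm_mult)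
  have a: "cmod ((- \<i> * complex_of_real x) ^ n) * cmod (Ef z (complex_of_real x)) \<le> \<bar>x\<bar> ^ n * exp (c1 * \<bar>x\<bar>)"
    using norm_Ef_le[OF assms(1), of x]
    by (intro mult_mono) (auto simp: norm_power norm_mult)
  have "cmod (Fi \<psi> n w x - Fi \<psi> n z x - (w - z) * Fi \<psi> (Suc n) z x)
      = (cmod ((- \<i> * complex_of_real x) ^ n) * cmod (Ef z (complex_of_real x))) * cmod (exp t - 1 - t) * cmod (\<psi> x)"
    unfolding eq norm_mult ..
  also have "\<dots> \<le> (\<bar>x\<bar> ^ n * exp (c1 * \<bar>x\<bar>)) * (cmod t ^ 2 * exp (cmod t)) * cmod (\<psi> x)"
    by (intro mult_right_mono mult_mono[OF a r]) auto
  also have "\<dots> \<le> ((1 + \<bar>x\<bar>) ^ n * exp (c1 * \<bar>x\<bar>)) * (cmod (w - z) ^ 2 * (1 + \<bar>x\<bar>) ^ 2 * exp (d * \<bar>x\<bar>)) * cmod (\<psi> x)"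
  proof (intro mult_right_mono mult_mono)
    show "\<bar>x\<bar> ^ n \<le> (1 + \<bar>x\<bar>) ^ n" by (intro power_mono) auto
    show "cmod t ^ 2 \<le> cmod (w - z) ^ 2 * (1 + \<bar>x\<bar>) ^ 2"
      unfolding nt power_mult_distrib by (intro mult_left_mono power_mono) auto
    show "exp (cmod t) \<le> exp (d * \<bar>x\<bar>)"
      unfolding nt using assms(2) by (simp add: mult_right_mono)
  qed auto
  also have "\<dots> = cmod (w - z) ^ 2 * ((1 + \<bar>x\<bar>) ^ (n + 2) * exp ((c1 + d) * \<bar>x\<bar>) * cmod (\<psi> x))"
  proof -
    have "exp ((c1 + d) * \<bar>x\<bar>) = exp (c1 * \<bar>x\<bar>) * exp (d * \<bar>x\<bar>)" by (simp add: distrib_right exp_add)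
    then show ?thesis by (simp only: power_add mult_ac)
  qed
  finally show ?thesis .
qed

lemma Fn_deriv:
  assumes "expint b \<psi>" "\<bar>Im z\<bar> < b"
  shows "(Fn \<psi> n has_field_derivative Fn \<psi> (Suc n) z) (at z)"
proof -
  define c1 where "c1 = \<bar>Im z\<bar>"
  define d where "d = (b - c1) / 2"
  have d: "d > 0" using assms(2) by (simp add: d_def c1_def)
  have c1d: "c1 + d < b" using assms(2) by (simp add: d_def c1_def field_simps)
  define K where "K = (LINT x|lborel. (1 + \<bar>x\<bar>) ^ (n + 2) * exp ((c1 + d) * \<bar>x\<bar>) * cmod (\<psi> x))"
  have iK: "integrable lborel (\<lambda>x. (1 + \<bar>x\<bar>) ^ (n + 2) * exp ((c1 + d) * \<bar>x\<bar>) * cmod (\<psi> x))"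
    using assms(1) c1d unfolding expint_def by blast
  have Iz: "integrable lborel (Fi \<psi> m z)" for m
    by (rule Fi_integrable[OF assms(1) _ c1d]) (use d in \<open>simp add: c1_def\<close>)
  have bnd: "cmod ((Fn \<psi> n w - Fn \<psi> n z) / (w - z) - Fn \<psi> (Suc n) z) \<le> cmod (w - z) * K"
    if w: "cmod (w - z) < d" "w \<noteq> z" for w
  proof -
    have Imw: "\<bar>Im w\<bar> \<le> c1 + d"
    proof -
      have "\<bar>Im w - Im z\<bar> \<le> cmod (w - z)" using abs_Im_le_cmod[of "w - z"] by simp
      then show ?thesis using w(1) by (simp add: c1_def)
    qed
    have Iw: "integrable lborel (Fi \<psi> n w)" by (rule Fi_integrable[OF assms(1) Imw c1d])
    have "(LINT x|lborel. Fi \<psi> n w x) - (LINT x|lborel. Fi \<psi> n z x) - (w - z) * (LINT x|lborel. Fi \<psi> (Suc n) z x)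
        = (LINT x|lborel. Fi \<psi> n w x - Fi \<psi> n z x - (w - z) * Fi \<psi> (Suc n) z x)"
      using Iw Iz by simp
    also have "cmod \<dots> \<le> (LINT x|lborel. cmod (w - z) ^ 2 * ((1 + \<bar>x\<bar>) ^ (n + 2) * exp ((c1 + d) * \<bar>x\<bar>) * cmod (\<psi> x)))"
    proof (rule Bochner_Integration.integral_norm_bound_integral)
      show "integrable lborel (\<lambda>x. Fi \<psi> n w x - Fi \<psi> n z x - (w - z) * Fi \<psi> (Suc n) z x)"
        using Iw Iz by auto
      show "integrable lborel (\<lambda>x. cmod (w - z) ^ 2 * ((1 + \<bar>x\<bar>) ^ (n + 2) * exp ((c1 + d) * \<bar>x\<bar>) * cmod (\<psi> x)))"
        using iK by auto
      show "norm (Fi \<psi> n w x - Fi \<psi> n z x - (w - z) * Fi \<psi> (Suc n) z x)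
         \<le> cmod (w - z) ^ 2 * ((1 + \<bar>x\<bar>) ^ (n + 2) * exp ((c1 + d) * \<bar>x\<bar>) * cmod (\<psi> x))" for x
        by (rule Fi_diff_bound) (use w d in \<open>auto simp: c1_def\<close>)
    qed
    also have "\<dots> = cmod (w - z) ^ 2 * K" by (simp add: K_def)
    finally have A: "cmod ((LINT x|lborel. Fi \<psi> n w x) - (LINT x|lborel. Fi \<psi> n z x) - (w - z) * (LINT x|lborel. Fi \<psi> (Suc n) z x))
       \<le> cmod (w - z) ^ 2 * K" .
    have wz: "w - z \<noteq> 0" using w by simp
    have "(Fn \<psi> n w - Fn \<psi> n z) / (w - z) - Fn \<psi> (Suc n) z
        = c0 * ((LINT x|lborel. Fi \<psi> n w x) - (LINT x|lborel. Fi \<psi> n z x) - (w - z) * (LINT x|lborel. Fi \<psi> (Suc n) z x)) / (w - z)"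
      unfolding Fn_def using wz by (simp add: field_simps)
    also have "cmod \<dots> \<le> 1 * (cmod (w - z) ^ 2 * K) / cmod (w - z)"
      unfolding norm_divide norm_mult
    proof (intro divide_right_mono mult_mono A)
      have "1 \<le> sqrt (2 * pi)" using pi_gt3 by (intro real_le_rsqrt) simp
      then show "cmod c0 \<le> 1" unfolding c0_def norm_of_real by simp
    qed auto
    also have "\<dots> = cmod (w - z) * K" using wz by (simp add: power2_eq_square)
    finally show ?thesis .
  qed
  have "((\<lambda>w. (Fn \<psi> n w - Fn \<psi> n z) / (w - z) - Fn \<psi> (Suc n) z) \<longlongrightarrow> 0) (at z)"
  proof (rule Lim_null_comparison)
    show "\<forall>\<^sub>F w in at z. norm ((Fn \<psi> n w - Fn \<psi> n z) / (w - z) - Fn \<psi> (Suc n) z) \<le> cmod (w - z) * K"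
      using d unfolding eventually_at by (intro exI[of _ d]) (auto simp: dist_norm intro!: bnd)
    have "((\<lambda>w. cmod (w - z) * K) \<longlongrightarrow> cmod (z - z) * K) (at z)"
      by (intro tendsto_intros)
    then show "((\<lambda>w. cmod (w - z) * K) \<longlongrightarrow> 0) (at z)" by simp
  qed
  then show ?thesis
    unfolding has_field_derivative_iff by (simp add: LIM_zero_iff)
qed


lemma fourier_Fn: "fourier \<psi> x = Fn \<psi> 0 (of_real x)"
proof -
  have "(LINT t|lborel. \<psi> t * cis (- (x * t))) = (LINT t|lborel. Fi \<psi> 0 (of_real x) t)"
    by (rule Bochner_Integration.integral_cong) (auto simp: Fi_def Ef_def cis_conv_exp mult_ac)
  then show ?thesis by (simp add: fourier_def Fn_def c0_def)
qed

lemma cderiv_Fn: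
  assumes "expint b \<psi>" "b > 0"
  shows "cderiv n (fourier \<psi>) = (\<lambda>x. Fn \<psi> n (of_real x))"
proof (induction n)
  case 0 then show ?case by (simp add: fourier_Fn[abs_def])
next
  case (Suc n)
  have "vector_derivative (\<lambda>x. Fn \<psi> n (of_real x)) (at x) = Fn \<psi> (Suc n) (of_real x)" for x
  proof (rule vector_derivative_at)
    show "((\<lambda>x. Fn \<psi> n (of_real x)) has_vector_derivative Fn \<psi> (Suc n) (of_real x)) (at x)"
      by (rule has_vector_derivative_real_field, rule Fn_deriv[OF assms(1)]) (use assms(2) in simp)
  qed
  then show ?case using Suc by simp
qed

definition Bnd :: "(real \<Rightarrow> complex) \<Rightarrow> nat \<Rightarrow> real \<Rightarrow> real" where
  "Bnd G j c = (LINT x|lborel. (1 + \<bar>x\<bar>) ^ j * exp (c * \<bar>x\<bar>) * cmod (G x))"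

lemma Wint_integrable:
  assumes "expint b G" "\<bar>Im z\<bar> \<le> c" "c < b"
  shows "integrable lborel (\<lambda>x. G x * Wf j z (of_real x))"
proof -
  have "integrable lborel (\<lambda>x. Wf j z (of_real x) * G x)"
    by (rule expint_integrable[OF assms(1,3) cont_Wf, where K=1 and n=j])
      (use Fi_bound[OF assms(2), of _ j] in \<open>simp add: Wf_def norm_mult norm_power\<close>)
  then show ?thesis by (simp add: mult.commute)
qed

lemma Wint_bound:
  assumes "expint b G" "\<bar>Im z\<bar> \<le> c" "c < b" "j \<le> r"
  shows "cmod (LINT x|lborel. G x * Wf j z (of_real x)) \<le> Bnd G r c"
  unfolding Bnd_def
proof (rule Bochner_Integration.integral_norm_bound_integral[OF Wint_integrable[OF assms(1-3)]])
  show "integrable lborel (\<lambda>x. (1 + \<bar>x\<bar>) ^ r * exp (c * \<bar>x\<bar>) * cmod (G x))"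
    using assms unfolding expint_def by blast
  fix x
  have "cmod (Wf j z (of_real x)) \<le> 1 * (1 + \<bar>x\<bar>) ^ j * exp (c * \<bar>x\<bar>)"
    using Fi_bound[OF assms(2), of x j] by (simp add: Wf_def norm_mult norm_power)
  also have "\<dots> \<le> (1 + \<bar>x\<bar>) ^ r * exp (c * \<bar>x\<bar>)"
    using assms(4) by (simp add: power_increasing mult_right_mono)
  finally show "norm (G x * Wf j z (of_real x)) \<le> (1 + \<bar>x\<bar>) ^ r * exp (c * \<bar>x\<bar>) * cmod (G x)"
    by (simp add: norm_mult mult_left_mono mult_ac)
qed

lemma dW_split: "dW j z w = of_nat j * Wf (j - 1) z w - \<i> * z * Wf j z w"
  by (simp add: dW_def Wf_def algebra_simps)

lemma ibp_rec:
  assumes ea: "expint b a" and eb: "expint b bb"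
    and hyp: "\<And>\<phi>. test_function \<phi> \<Longrightarrow>
      (LINT x|lborel. a x * of_real (deriv \<phi> x)) = - (LINT x|lborel. bb x * of_real (\<phi> x))"
    and z: "\<bar>Im z\<bar> \<le> c" "c < b"
  shows "cmod z * cmod (LINT x|lborel. a x * Wf j z (of_real x)) \<le>
     j * cmod (LINT x|lborel. a x * Wf (j - 1) z (of_real x)) + cmod (LINT x|lborel. bb x * Wf j z (of_real x))"
proof -
  have zb: "\<bar>Im z\<bar> < b" using z by simp
  have "(LINT x|lborel. a x * dW j z (of_real x)) =
      of_nat j * (LINT x|lborel. a x * Wf (j - 1) z (of_real x)) - \<i> * z * (LINT x|lborel. a x * Wf j z (of_real x))"
  proof -
    have "(LINT x|lborel. a x * dW j z (of_real x)) =
      (LINT x|lborel. of_nat j * (a x * Wf (j - 1) z (of_real x)) - \<i> * z * (a x * Wf j z (of_real x)))"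
      by (rule Bochner_Integration.integral_cong) (auto simp: dW_split algebra_simps)
    also have "\<dots> = of_nat j * (LINT x|lborel. a x * Wf (j - 1) z (of_real x)) - \<i> * z * (LINT x|lborel. a x * Wf j z (of_real x))"
      using Wint_integrable[OF ea z, of "j - 1"] Wint_integrable[OF ea z, of j] by simp
    finally show ?thesis .
  qed
  moreover have "(LINT x|lborel. a x * dW j z (of_real x)) = - (LINT x|lborel. bb x * Wf j z (of_real x))"
    by (rule ibp_ext[OF ea eb hyp zb])
  ultimately have "\<i> * z * (LINT x|lborel. a x * Wf j z (of_real x)) =
      of_nat j * (LINT x|lborel. a x * Wf (j - 1) z (of_real x)) + (LINT x|lborel. bb x * Wf j z (of_real x))"
    by (simp add: algebra_simps)
  then have "cmod (\<i> * z * (LINT x|lborel. a x * Wf j z (of_real x))) \<le>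
      cmod (of_nat j * (LINT x|lborel. a x * Wf (j - 1) z (of_real x))) + cmod (LINT x|lborel. bb x * Wf j z (of_real x))"
    by (metis norm_triangle_ineq)
  then show ?thesis by (simp add: norm_mult)
qed


lemma cmod_c0: "cmod c0 \<le> 1"
proof -
  have "1 \<le> sqrt (2 * pi)" using pi_gt3 by (intro real_le_rsqrt) simp
  then show ?thesis unfolding c0_def norm_of_real by simp
qed

lemma Fn_as_W: "Fn \<psi> r z = c0 * (- \<i>) ^ r * (LINT x|lborel. \<psi> x * Wf r z (of_real x))"
proof -
  have "(LINT x|lborel. Fi \<psi> r z x) = (LINT x|lborel. (- \<i>) ^ r * (\<psi> x * Wf r z (of_real x)))"
  proof (rule Bochner_Integration.integral_cong)
    fix x
    have "(- (\<i> * of_real x)) ^ r = (- \<i>) ^ r * (of_real x :: complex) ^ r"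
      by (metis mult_minus_left power_mult_distrib)
    then show "Fi \<psi> r z x = (- \<i>) ^ r * (\<psi> x * Wf r z (of_real x))"
      by (simp add: Fi_def Wf_def mult_ac)
  qed simp
  then show ?thesis by (simp add: Fn_def)
qed

lemma Fn_decay:
  assumes e0: "expint b \<psi>" and e1: "expint b g1" and e2: "expint b g2"
    and h1: "\<And>\<phi>. test_function \<phi> \<Longrightarrow>
      (LINT x|lborel. \<psi> x * of_real (deriv \<phi> x)) = - (LINT x|lborel. g1 x * of_real (\<phi> x))"
    and h2: "\<And>\<phi>. test_function \<phi> \<Longrightarrow>
      (LINT x|lborel. g1 x * of_real (deriv \<phi> x)) = - (LINT x|lborel. g2 x * of_real (\<phi> x))"
    and cb: "c < b"
  shows "\<exists>K. \<forall>z. \<bar>Im z\<bar> \<le> c \<longrightarrow> (1 + cmod z ^ 2) * cmod (Fn \<psi> r z) \<le> K"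
proof -
  define B where "B = Bnd \<psi> r c + Bnd g1 r c + Bnd g2 r c"
  have B0: "0 \<le> Bnd G r c" for G unfolding Bnd_def by (intro integral_nonneg_AE) auto
  have "(1 + cmod z ^ 2) * cmod (Fn \<psi> r z) \<le> (1 + (r + 1) ^ 2) * B" if z: "\<bar>Im z\<bar> \<le> c" for z
  proof -
    define I where "I j = (LINT x|lborel. \<psi> x * Wf j z (of_real x))" for j
    define J where "J j = (LINT x|lborel. g1 x * Wf j z (of_real x))" for j
    define L where "L j = (LINT x|lborel. g2 x * Wf j z (of_real x))" for j
    have bI: "cmod (I j) \<le> B" if "j \<le> r" for j
      using Wint_bound[OF e0 z cb that] B0[of g1] B0[of g2] unfolding I_def B_def by linarith
    have bJ: "cmod (J j) \<le> B" if "j \<le> r" for j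
      using Wint_bound[OF e1 z cb that] B0[of \<psi>] B0[of g2] unfolding J_def B_def by linarith
    have bL: "cmod (L j) \<le> B" if "j \<le> r" for j
      using Wint_bound[OF e2 z cb that] B0[of \<psi>] B0[of g1] unfolding L_def B_def by linarith
    have B00: "0 \<le> B" using B0[of \<psi>] B0[of g1] B0[of g2] by (simp add: B_def)
    have rI: "cmod z * cmod (I j) \<le> j * cmod (I (j - 1)) + cmod (J j)" for j
      unfolding I_def J_def by (rule ibp_rec[OF e0 e1 h1 z cb])
    have rJ: "cmod z * cmod (J j) \<le> j * cmod (J (j - 1)) + cmod (L j)" for j
      unfolding J_def L_def by (rule ibp_rec[OF e1 e2 h2 z cb])
    have zI: "cmod z * cmod (I j) \<le> (r + 1) * B" if "j \<le> r" for j
    proof -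
      have "j * cmod (I (j - 1)) \<le> r * B"
        using bI[of "j - 1"] that B00 by (intro mult_mono) auto
      then show ?thesis using rI[of j] bJ[OF that] by (simp add: algebra_simps)
    qed
    have zJ: "cmod z * cmod (J j) \<le> (r + 1) * B" if "j \<le> r" for j
    proof -
      have "j * cmod (J (j - 1)) \<le> r * B"
        using bJ[of "j - 1"] that B00 by (intro mult_mono) auto
      then show ?thesis using rJ[of j] bL[OF that] by (simp add: algebra_simps)
    qed
    have "cmod z ^ 2 * cmod (I r) = cmod z * (cmod z * cmod (I r))" by (simp add: power2_eq_square)
    also have "\<dots> \<le> cmod z * (r * cmod (I (r - 1)) + cmod (J r))"
      by (intro mult_left_mono rI) auto
    also have "\<dots> = r * (cmod z * cmod (I (r - 1))) + cmod z * cmod (J r)"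
      by (simp add: algebra_simps)
    also have "\<dots> \<le> r * ((r + 1) * B) + (r + 1) * B"
      by (intro add_mono mult_left_mono zI zJ) auto
    finally have A: "cmod z ^ 2 * cmod (I r) \<le> (r + 1) ^ 2 * B" by (simp add: power2_eq_square algebra_simps)
    have F: "cmod (Fn \<psi> r z) \<le> cmod (I r)"
    proof -
      have "cmod (Fn \<psi> r z) = cmod c0 * cmod (I r)" by (simp add: Fn_as_W I_def norm_mult norm_power)
      also have "\<dots> \<le> 1 * cmod (I r)" by (intro mult_right_mono cmod_c0) auto
      finally show ?thesis by simp
    qed
    have "(1 + cmod z ^ 2) * cmod (Fn \<psi> r z) \<le> (1 + cmod z ^ 2) * cmod (I r)"
      by (intro mult_left_mono F) auto
    also have "\<dots> = cmod (I r) + cmod z ^ 2 * cmod (I r)" by (simp add: algebra_simps)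
    also have "\<dots> \<le> B + (r + 1) ^ 2 * B" using A bI[of r] by simp
    finally show ?thesis by (simp add: algebra_simps)
  qed
  then show ?thesis by blast
qed


lemma taylor_term_aux:
  fixes q z p :: complex
  shows "z ^ k /\<^sub>R fact k * (q ^ (r + k) * 1 * p) = q ^ r * ((z * q) ^ k /\<^sub>R fact k) * p"
  by (simp add: power_add power_mult_distrib)

lemma sum_factor_aux:
  fixes a p :: complex
  shows "(\<Sum>k\<in>A. a * f k * p) = a * (\<Sum>k\<in>A. f k) * p"
  by (simp add: sum_distrib_left sum_distrib_right mult.assoc)

lemma Fi_taylor_eq:
  "Fi \<psi> r z x - (\<Sum>k<Suc m. z ^ k /\<^sub>R fact k * Fi \<psi> (r + k) 0 x)
   = (- \<i> * of_real x) ^ r * (exp (z * (- \<i> * of_real x)) - (\<Sum>k<Suc m. (z * (- \<i> * of_real x)) ^ k /\<^sub>R fact k)) * \<psi> x"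
proof -
  have E: "Ef z (of_real x) = exp (z * (- \<i> * of_real x))" by (simp add: Ef_def algebra_simps)
  have "(\<Sum>k<Suc m. z ^ k /\<^sub>R fact k * Fi \<psi> (r + k) 0 x)
      = (\<Sum>k<Suc m. (- \<i> * of_real x) ^ r * ((z * (- \<i> * of_real x)) ^ k /\<^sub>R fact k) * \<psi> x)"
  proof (rule sum.cong[OF refl])
    fix k
    have "Fi \<psi> (r + k) 0 x = (- \<i> * of_real x) ^ (r + k) * 1 * \<psi> x" by (simp add: Fi_def Ef_def)
    then show "z ^ k /\<^sub>R fact k * Fi \<psi> (r + k) 0 x = (- \<i> * of_real x) ^ r * ((z * (- \<i> * of_real x)) ^ k /\<^sub>R fact k) * \<psi> x"
      by (simp only: taylor_term_aux)
  qed
  also have "\<dots> = (- \<i> * of_real x) ^ r * (\<Sum>k<Suc m. (z * (- \<i> * of_real x)) ^ k /\<^sub>R fact k) * \<psi> x"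
    by (rule sum_factor_aux)
  finally show ?thesis by (simp add: Fi_def E algebra_simps)
qed

lemma Fn_near0:
  assumes e: "expint b \<psi>" and d: "0 < d" "d < b"
    and z0: "\<forall>k\<le>m. Fn \<psi> (r + k) 0 = 0"
  shows "\<exists>K. \<forall>z. cmod z \<le> d \<longrightarrow> cmod (Fn \<psi> r z) \<le> K * cmod z ^ (m + 1)"
proof -
  define K where "K = Bnd \<psi> (r + m + 1) d"
  have iK: "integrable lborel (\<lambda>x. (1 + \<bar>x\<bar>) ^ (r + m + 1) * exp (d * \<bar>x\<bar>) * cmod (\<psi> x))"
    using e d unfolding expint_def by blast
  have "cmod (Fn \<psi> r z) \<le> K * cmod z ^ (m + 1)" if z: "cmod z \<le> d" for z
  proof -
    have Imz: "\<bar>Im z\<bar> \<le> d" using abs_Im_le_cmod[of z] z by linarith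
    have I0: "integrable lborel (Fi \<psi> j 0)" for j by (rule Fi_integrable[OF e _ d(2)]) (use d in simp)
    have Iz: "integrable lborel (Fi \<psi> r z)" by (rule Fi_integrable[OF e Imz d(2)])
    have S: "(LINT x|lborel. (\<Sum>k<Suc m. z ^ k /\<^sub>R fact k * Fi \<psi> (r + k) 0 x)) = 0"
    proof -
      have "(LINT x|lborel. (\<Sum>k<Suc m. z ^ k /\<^sub>R fact k * Fi \<psi> (r + k) 0 x))
          = (\<Sum>k<Suc m. z ^ k /\<^sub>R fact k * (LINT x|lborel. Fi \<psi> (r + k) 0 x))"
        by (subst Bochner_Integration.integral_sum) (use I0 in auto)
      also have "\<dots> = 0"
      proof (rule sum.neutral, rule ballI)
        fix k assume "k \<in> {..<Suc m}"
        then have "Fn \<psi> (r + k) 0 = 0" using z0 by auto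
        then have "(LINT x|lborel. Fi \<psi> (r + k) 0 x) = 0" by (simp add: Fn_def c0_def)
        then show "z ^ k /\<^sub>R fact k * (LINT x|lborel. Fi \<psi> (r + k) 0 x) = 0" by simp
      qed
      finally show ?thesis .
    qed
    have "(LINT x|lborel. Fi \<psi> r z x) = (LINT x|lborel. Fi \<psi> r z x - (\<Sum>k<Suc m. z ^ k /\<^sub>R fact k * Fi \<psi> (r + k) 0 x))"
      using S Iz I0 by (subst Bochner_Integration.integral_diff) auto
    also have "cmod \<dots> \<le> (LINT x|lborel. cmod z ^ (m + 1) * ((1 + \<bar>x\<bar>) ^ (r + m + 1) * exp (d * \<bar>x\<bar>) * cmod (\<psi> x)))"
    proof (rule Bochner_Integration.integral_norm_bound_integral)
      show "integrable lborel (\<lambda>x. Fi \<psi> r z x - (\<Sum>k<Suc m. z ^ k /\<^sub>R fact k * Fi \<psi> (r + k) 0 x))"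
        using Iz I0 by auto
      show "integrable lborel (\<lambda>x. cmod z ^ (m + 1) * ((1 + \<bar>x\<bar>) ^ (r + m + 1) * exp (d * \<bar>x\<bar>) * cmod (\<psi> x)))"
        using iK by auto
      fix x
      define t where "t = z * (- \<i> * of_real x)"
      have nt: "cmod t = cmod z * \<bar>x\<bar>" by (simp add: t_def norm_mult)
      have "norm (Fi \<psi> r z x - (\<Sum>k<Suc m. z ^ k /\<^sub>R fact k * Fi \<psi> (r + k) 0 x))
          = \<bar>x\<bar> ^ r * cmod (exp t - (\<Sum>k<Suc m. t ^ k /\<^sub>R fact k)) * cmod (\<psi> x)"
        unfolding Fi_taylor_eq t_def[symmetric] by (simp add: norm_mult norm_power)
      also have "\<dots> \<le> \<bar>x\<bar> ^ r * (cmod t ^ Suc m * exp (cmod t)) * cmod (\<psi> x)"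
        by (intro mult_right_mono mult_left_mono exp_remainder) auto
      also have "\<dots> \<le> (1 + \<bar>x\<bar>) ^ r * (cmod z ^ (m + 1) * (1 + \<bar>x\<bar>) ^ (m + 1) * exp (d * \<bar>x\<bar>)) * cmod (\<psi> x)"
      proof (intro mult_right_mono mult_mono)
        show "\<bar>x\<bar> ^ r \<le> (1 + \<bar>x\<bar>) ^ r" by (intro power_mono) auto
        show "cmod t ^ Suc m \<le> cmod z ^ (m + 1) * (1 + \<bar>x\<bar>) ^ (m + 1)"
          unfolding nt power_mult_distrib Suc_eq_plus1 by (intro mult_left_mono power_mono) auto
        show "exp (cmod t) \<le> exp (d * \<bar>x\<bar>)" unfolding nt using z by (simp add: mult_right_mono)
      qed auto
      also have "\<dots> = cmod z ^ (m + 1) * ((1 + \<bar>x\<bar>) ^ (r + m + 1) * exp (d * \<bar>x\<bar>) * cmod (\<psi> x))"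
        by (simp only: power_add mult_ac add.assoc)
      finally show "norm (Fi \<psi> r z x - (\<Sum>k<Suc m. z ^ k /\<^sub>R fact k * Fi \<psi> (r + k) 0 x))
          \<le> cmod z ^ (m + 1) * ((1 + \<bar>x\<bar>) ^ (r + m + 1) * exp (d * \<bar>x\<bar>) * cmod (\<psi> x))" .
    qed
    also have "\<dots> = cmod z ^ (m + 1) * K" by (simp add: K_def Bnd_def)
    finally have A: "cmod (LINT x|lborel. Fi \<psi> r z x) \<le> cmod z ^ (m + 1) * K" .
    have "cmod (Fn \<psi> r z) = cmod c0 * cmod (LINT x|lborel. Fi \<psi> r z x)" by (simp add: Fn_def norm_mult)
    also have "\<dots> \<le> 1 * (cmod z ^ (m + 1) * K)" by (intro mult_mono cmod_c0 A) auto
    finally show ?thesis by (simp add: mult_ac)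
  qed
  then show ?thesis by blast
qed


definition gf :: "(real \<Rightarrow> complex) \<Rightarrow> nat \<Rightarrow> nat \<Rightarrow> complex \<Rightarrow> complex" where
  "gf \<psi> r m z = Fn \<psi> r z / z ^ m"

lemma gf_0: "\<forall>k\<le>m. Fn \<psi> (r + k) 0 = 0 \<Longrightarrow> gf \<psi> r m 0 = 0"
  by (cases m) (auto simp: gf_def)

lemma gf_diff:
  assumes "expint b \<psi>" "\<bar>Im z\<bar> < b" "z \<noteq> 0"
  shows "gf \<psi> r m field_differentiable (at z)"
proof -
  have "Fn \<psi> r field_differentiable (at z)"
    using Fn_deriv[OF assms(1,2)] field_differentiable_def by blast
  then show ?thesis unfolding gf_def[abs_def]
    using assms(3) by (intro field_differentiable_divide field_differentiable_power) (auto simp: field_differentiable_ident)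
qed

lemma gf_near0:
  assumes e: "expint b \<psi>" "b > 0" and z0: "\<forall>k\<le>m. Fn \<psi> (r + k) 0 = 0"
  shows "\<exists>K. \<forall>z. cmod z \<le> b / 2 \<longrightarrow> cmod (gf \<psi> r m z) \<le> K * cmod z"
proof -
  obtain K where K: "\<And>z. cmod z \<le> b / 2 \<Longrightarrow> cmod (Fn \<psi> r z) \<le> K * cmod z ^ (m + 1)"
    using Fn_near0[OF e(1) _ _ z0, of "b / 2"] e(2) by auto
  have "cmod (gf \<psi> r m z) \<le> K * cmod z" if "cmod z \<le> b / 2" for z
  proof (cases "z = 0")
    case True
    have "K \<ge> 0 \<or> True" by simp
    then show ?thesis using True gf_0[OF z0] by simp
  next
    case False
    have "cmod (gf \<psi> r m z) = cmod (Fn \<psi> r z) / cmod z ^ m" by (simp add: gf_def norm_divide norm_power)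
    also have "\<dots> \<le> K * cmod z ^ (m + 1) / cmod z ^ m"
      using K[OF that] by (intro divide_right_mono) auto
    also have "\<dots> = K * cmod z" using False by (simp add: field_simps)
    finally show ?thesis .
  qed
  then show ?thesis by blast
qed

lemma gf_cont0:
  assumes e: "expint b \<psi>" "b > 0" and z0: "\<forall>k\<le>m. Fn \<psi> (r + k) 0 = 0"
  shows "isCont (gf \<psi> r m) 0"
proof -
  obtain K where K: "\<And>z. cmod z \<le> b / 2 \<Longrightarrow> cmod (gf \<psi> r m z) \<le> K * cmod z"
    using gf_near0[OF e z0] by blast
  have "(gf \<psi> r m \<longlongrightarrow> 0) (at 0)"
  proof (rule Lim_null_comparison)
    show "\<forall>\<^sub>F z in at 0. norm (gf \<psi> r m z) \<le> K * cmod z"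
      unfolding eventually_at using e(2) by (intro exI[of _ "b / 2"]) (auto intro!: K simp: dist_norm)
    have "((\<lambda>z. K * cmod z) \<longlongrightarrow> K * cmod (0::complex)) (at 0)" by (intro tendsto_intros)
    then show "((\<lambda>z. K * cmod z) \<longlongrightarrow> 0) (at 0)" by simp
  qed
  then show ?thesis using gf_0[OF z0] by (simp add: isCont_def)
qed

lemma gf_cont:
  assumes e: "expint b \<psi>" "b > 0" and z0: "\<forall>k\<le>m. Fn \<psi> (r + k) 0 = 0" and z: "\<bar>Im z\<bar> < b"
  shows "isCont (gf \<psi> r m) z"
proof (cases "z = 0")
  case True then show ?thesis using gf_cont0[OF e z0] by simp
next
  case False then show ?thesis
    using gf_diff[OF e(1) z False] field_differentiable_imp_continuous_at by blast
qed

lemma gf_decay: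
  assumes e: "expint b \<psi>" "b > 0" and z0: "\<forall>k\<le>m. Fn \<psi> (r + k) 0 = 0"
    and dec: "\<And>z. \<bar>Im z\<bar> \<le> c \<Longrightarrow> (1 + cmod z ^ 2) * cmod (Fn \<psi> r z) \<le> K"
  shows "\<exists>K2. \<forall>z. \<bar>Im z\<bar> \<le> c \<longrightarrow> cmod (gf \<psi> r m z) \<le> K2 / (1 + (Re z)\<^sup>2)"
proof -
  define d where "d = b / 2"
  have d: "d > 0" using e(2) by (simp add: d_def)
  obtain K1 where K1: "\<And>z. cmod z \<le> d \<Longrightarrow> cmod (gf \<psi> r m z) \<le> K1 * cmod z"
    using gf_near0[OF e z0] unfolding d_def by blast
  define K2 where "K2 = \<bar>K1\<bar> * d * (1 + d\<^sup>2) + \<bar>K\<bar> / d ^ m"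
  have "cmod (gf \<psi> r m z) \<le> K2 / (1 + (Re z)\<^sup>2)" if z: "\<bar>Im z\<bar> \<le> c" for z
  proof (cases "cmod z \<le> d")
    case True
    have Re2: "(Re z)\<^sup>2 \<le> d\<^sup>2"
      using abs_Re_le_cmod[of z] True by (simp add: abs_le_square_iff[symmetric] abs_le_iff)
    have "cmod (gf \<psi> r m z) \<le> K1 * cmod z" by (rule K1[OF True])
    also have "\<dots> \<le> \<bar>K1\<bar> * d" using True by (intro mult_mono) auto
    also have "\<dots> = \<bar>K1\<bar> * d * (1 + d\<^sup>2) / (1 + d\<^sup>2)"
    proof -
      have "1 + d\<^sup>2 \<noteq> 0" by (metis add_pos_nonneg zero_le_power2 zero_less_one less_irrefl)
      then show ?thesis by simp
    qed
    also have "\<dots> \<le> \<bar>K1\<bar> * d * (1 + d\<^sup>2) / (1 + (Re z)\<^sup>2)"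
    proof -
      have p: "0 < 1 + d\<^sup>2" "0 < 1 + (Re z)\<^sup>2" by (intro add_pos_nonneg; simp)+
      show ?thesis using Re2 d p by (intro divide_left_mono) auto
    qed
    also have "\<dots> \<le> K2 / (1 + (Re z)\<^sup>2)"
      unfolding K2_def using d by (intro divide_right_mono) (auto intro!: add_pos_nonneg)
    finally show ?thesis .
  next
    case False
    then have zd: "d \<le> cmod z" "z \<noteq> 0" using d by auto
    have p: "0 < 1 + (Re z)\<^sup>2" by (intro add_pos_nonneg; simp)
    have F: "cmod (Fn \<psi> r z) \<le> \<bar>K\<bar> / (1 + (Re z)\<^sup>2)"
    proof -
      have "(1 + (Re z)\<^sup>2) * cmod (Fn \<psi> r z) \<le> (1 + cmod z ^ 2) * cmod (Fn \<psi> r z)"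
      proof (intro mult_right_mono)
        have "\<bar>Re z\<bar>\<^sup>2 \<le> (cmod z)\<^sup>2" using abs_Re_le_cmod[of z] by (intro power_mono) auto
        then show "1 + (Re z)\<^sup>2 \<le> 1 + cmod z ^ 2" by simp
      qed simp
      also have "\<dots> \<le> \<bar>K\<bar>" using dec[OF z] by simp
      finally show ?thesis using p by (subst pos_le_divide_eq) (auto simp: mult.commute)
    qed
    have A0: "0 \<le> \<bar>K1\<bar> * d * (1 + d\<^sup>2)" using d by simp
    have "cmod (gf \<psi> r m z) = cmod (Fn \<psi> r z) / cmod z ^ m" by (simp add: gf_def norm_divide norm_power)
    also have "\<dots> \<le> cmod (Fn \<psi> r z) / d ^ m"
      using zd d by (intro divide_left_mono power_mono) auto
    also have "\<dots> \<le> (\<bar>K\<bar> / (1 + (Re z)\<^sup>2)) / d ^ m"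
      using d F by (intro divide_right_mono) auto
    also have "\<dots> = (\<bar>K\<bar> / d ^ m) / (1 + (Re z)\<^sup>2)" by simp
    also have "\<dots> \<le> K2 / (1 + (Re z)\<^sup>2)"
      unfolding K2_def using A0 p by (intro divide_right_mono) auto
    finally show ?thesis .
  qed
  then show ?thesis by blast
qed


lemma inv_sq_pw:
  fixes x :: real
  shows "1 / (1 + x\<^sup>2) \<le> indicator {-1..1} x + (indicator {1..} x *\<^sub>R x powr (-2) +
          indicator {1..} (0 + (-1) * x) *\<^sub>R (0 + (-1) * x) powr (-2))"
proof -
  have p: "0 < 1 + x\<^sup>2" by (intro add_pos_nonneg; simp)
  have inv: "1 / (1 + x\<^sup>2) \<le> y powr (-2)" if "y \<ge> 1" "y\<^sup>2 = x\<^sup>2" for y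
  proof -
    have "y powr (-2) = 1 / y powr 2" by (rule powr_minus_divide)
    also have "y powr 2 = y\<^sup>2" using that by (simp only: powr_numeral)
    finally have "y powr (-2) = 1 / y\<^sup>2" .
    moreover have "1 \<le> x\<^sup>2" using that one_le_power[of y 2] by simp
    moreover have "1 / (1 + x\<^sup>2) \<le> 1 / x\<^sup>2" if "1 \<le> x\<^sup>2"
      using that by (intro divide_left_mono) (auto intro!: mult_pos_pos)
    ultimately show ?thesis using that by simp
  qed
  have nn: "0 \<le> indicator {1..} y *\<^sub>R y powr (-2)" for y :: real by (simp add: indicator_def)
  consider "x \<ge> 1" | "x \<le> -1" | "\<bar>x\<bar> \<le> 1" by linarith
  then show ?thesis
  proof cases
    case 1
    then show ?thesis using inv[of x] nn[of "0 + (-1) * x"] by (simp add: indicator_def)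
  next
    case 2
    then show ?thesis using inv[of "-x"] nn[of x] by (simp add: indicator_def)
  next
    case 3
    have "1 / (1 + x\<^sup>2) \<le> 1" using p by simp
    then show ?thesis using 3 by (simp add: indicator_def abs_le_iff) (auto intro: add_increasing2)
  qed
qed

lemma integrable_inv_sq: "integrable lborel (\<lambda>x::real. 1 / (1 + x\<^sup>2))"
proof -
  have "(\<lambda>x::real. x powr (-2)) integrable_on {1..}"
    using has_integral_powr_to_inf[of "-2" 1] unfolding integrable_on_def by auto
  then have "(\<lambda>x::real. x powr (-2)) absolutely_integrable_on {1..}"
    by (rule nonnegative_absolutely_integrable_1) simp
  then have "integrable lebesgue (\<lambda>x::real. indicator {1..} x *\<^sub>R x powr (-2))"
    by (simp add: set_integrable_def)
  then have h: "integrable lborel (\<lambda>x::real. indicator {1..} x *\<^sub>R x powr (-2))"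
    by (subst (asm) integrable_completion) auto
  have h2: "integrable lborel (\<lambda>x::real. indicator {1..} (0 + (-1) * x) *\<^sub>R (0 + (-1) * x) powr (-2))"
    by (rule lborel_integrable_real_affine[OF h]) simp
  have h3: "integrable lborel (indicator {-1..1::real} :: real \<Rightarrow> real)"
    by (rule integrable_real_indicator) auto
  define G where "G x = indicator {-1..1} x + (indicator {1..} x *\<^sub>R x powr (-2) +
     indicator {1..} (0 + (-1) * x) *\<^sub>R (0 + (-1) * x) powr (-2))" for x :: real
  have iG: "integrable lborel G"
    unfolding G_def[abs_def] using h h2 h3 by (intro Bochner_Integration.integrable_add)
  have pw: "1 / (1 + x\<^sup>2) \<le> \<bar>G x\<bar>" for x :: real
  proof -
    have "1 / (1 + x\<^sup>2) \<le> G x" unfolding G_def by (rule inv_sq_pw)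
    then show ?thesis by simp
  qed
  show ?thesis
    by (rule Bochner_Integration.integrable_bound[OF iG]) (auto intro!: AE_I2 pw)
qed

lemma lint_lim:
  fixes F :: "real \<Rightarrow> complex"
  assumes "integrable lborel F"
  shows "(\<lambda>n. integral {- real n..real n} F) \<longlonglongrightarrow> (LINT x|lborel. F x)"
proof -
  have si: "set_integrable lborel {- real n..real n} F" for n
    unfolding set_integrable_def by (rule integrable_mult_indicator[OF _ assms]) auto
  have eq: "integral {- real n..real n} F = (LINT x|lborel. indicator {- real n..real n} x *\<^sub>R F x)" for n
    using set_borel_integral_eq_integral(2)[OF si[of n]] by (simp add: set_lebesgue_integral_def)
  have "(\<lambda>n. LINT x|lborel. indicator {- real n..real n} x *\<^sub>R F x) \<longlonglongrightarrow> (LINT x|lborel. F x)"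
  proof (rule integral_dominated_convergence[where w="\<lambda>x. norm (F x)"])
    show "F \<in> borel_measurable lborel" using assms by auto
    show "(\<lambda>x. indicator {- real n..real n} x *\<^sub>R F x) \<in> borel_measurable lborel" for n
      using si[of n] unfolding set_integrable_def by auto
    show "integrable lborel (\<lambda>x. norm (F x))" using assms by auto
    show "AE x in lborel. (\<lambda>n. indicator {- real n..real n} x *\<^sub>R F x) \<longlonglongrightarrow> F x"
    proof (rule AE_I2)
      fix x :: real
      obtain N :: nat where N: "\<bar>x\<bar> \<le> real N" using real_arch_simple by blast
      have "\<forall>n\<ge>N. indicator {- real n..real n} x *\<^sub>R F x = F x"
      proof (intro allI impI)
        fix n assume "n \<ge> N"
        then have "\<bar>x\<bar> \<le> real n" using N by (meson of_nat_le_iff order_trans)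
        then show "indicator {- real n..real n} x *\<^sub>R F x = F x" by (simp add: indicator_def abs_le_iff)
      qed
      then show "(\<lambda>n. indicator {- real n..real n} x *\<^sub>R F x) \<longlonglongrightarrow> F x"
        by (intro tendsto_eventually) (auto simp: eventually_sequentially)
    qed
    show "AE x in lborel. norm (indicator {- real n..real n} x *\<^sub>R F x) \<le> norm (F x)" for n
      by (rule AE_I2) (simp add: indicator_def)
  qed
  then show ?thesis by (simp add: eq)
qed


lemma rect_sum:
  assumes S: "convex S" "continuous_on S h" "finite K"
    and d: "\<And>x. x \<in> interior S - K \<Longrightarrow> h field_differentiable at x"
    and pts: "a \<in> S" "b \<in> S" "c \<in> S" "e \<in> S"
  shows "contour_integral (linepath a b) h + (contour_integral (linepath b c) h +
     (contour_integral (linepath c e) h + contour_integral (linepath e a) h)) = 0"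
proof -
  have hc: "(h has_contour_integral contour_integral (linepath p q) h) (linepath p q)" if "p \<in> S" "q \<in> S" for p q
  proof -
    have "closed_segment p q \<subseteq> S" using closed_segment_subset[OF that S(1)] .
    then have "continuous_on (closed_segment p q) h" using S(2) continuous_on_subset by blast
    then show ?thesis by (intro has_contour_integral_integral contour_integrable_continuous_linepath)
  qed
  define g where "g = linepath a b +++ (linepath b c +++ (linepath c e +++ linepath e a))"
  have j: "(h has_contour_integral (contour_integral (linepath a b) h + (contour_integral (linepath b c) h +
     (contour_integral (linepath c e) h + contour_integral (linepath e a) h)))) g"
    unfolding g_def
    by (intro has_contour_integral_join hc pts valid_path_join) auto
  have v: "valid_path g" unfolding g_def by (intro valid_path_join) auto
  have pi: "path_image g \<subseteq> S"
    unfolding g_def using closed_segment_subset[OF _ _ S(1)] pts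
    by (subst path_image_join; simp)+
  have cl: "pathfinish g = pathstart g" unfolding g_def by simp
  have "(h has_contour_integral 0) g"
    by (rule Cauchy_theorem_convex[OF S(2) S(1) S(3) d v pi cl])
  then show ?thesis using j has_contour_integral_unique by blast
qed

lemma seg_vert:
  assumes "w \<in> closed_segment (of_real R) (of_real R + \<i> * of_real \<eta>)"
  shows "Re w = R" "\<bar>Im w\<bar> \<le> \<bar>\<eta>\<bar>"
proof -
  obtain u where u: "0 \<le> u" "u \<le> 1" "w = (1 - u) *\<^sub>R of_real R + u *\<^sub>R (of_real R + \<i> * of_real \<eta>)"
    using assms unfolding in_segment by blast
  then have "Re w = R" "Im w = u * \<eta>" by (simp_all add: algebra_simps)
  then show "Re w = R" "\<bar>Im w\<bar> \<le> \<bar>\<eta>\<bar>"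
    using u(1,2) by (auto simp: abs_mult mult_le_cancel_right1 intro: mult_left_le_one_le)
qed

lemma contour_shift:
  fixes h :: "complex \<Rightarrow> complex" and \<eta> c K :: real
  assumes c: "\<bar>\<eta>\<bar> \<le> c"
    and cont: "continuous_on {w. \<bar>Im w\<bar> \<le> c} h"
    and diff: "\<And>w. \<bar>Im w\<bar> \<le> c \<Longrightarrow> w \<noteq> 0 \<Longrightarrow> h field_differentiable at w"
    and dec: "\<And>w. \<bar>Im w\<bar> \<le> c \<Longrightarrow> cmod (h w) \<le> K / (1 + (Re w)\<^sup>2)"
  shows "(LINT x|lborel. h (of_real x)) = (LINT x|lborel. h (of_real x + \<i> * of_real \<eta>))"
proof -
  define S where "S = {w. \<bar>Im w\<bar> \<le> c}"
  have cvx: "convex S"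
  proof -
    have "S = {w. Im w \<le> c} \<inter> {w. Im w \<ge> - c}" unfolding S_def by auto
    then show ?thesis using convex_halfspace_Im_le convex_halfspace_Im_ge convex_Int by metis
  qed
  have c0: "c \<ge> 0" using c by simp
  have K0: "K \<ge> 0" using dec[of 0] c0 by simp (meson norm_ge_zero order_trans)
  have cS: "continuous_on S h" using cont by (simp add: S_def)
  have dS: "\<And>x. x \<in> interior S - {0} \<Longrightarrow> h field_differentiable at x"
    using diff interior_subset unfolding S_def by blast
  define f1 where "f1 x = h (of_real x)" for x :: real
  define f2 where "f2 x = h (of_real x + \<i> * of_real \<eta>)" for x :: real
  have int: "integrable lborel f" if cf: "continuous_on UNIV f" and bf: "\<And>x. cmod (f x) \<le> K / (1 + x\<^sup>2)" for f :: "real \<Rightarrow> complex"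
  proof -
    have "integrable lborel (\<lambda>x::real. K * (1 / (1 + x\<^sup>2)))" by (intro Bochner_Integration.integrable_mult_right integrable_inv_sq)
    then show ?thesis
    proof (rule Bochner_Integration.integrable_bound)
      show "f \<in> borel_measurable lborel" using borel_measurable_continuous_onI[OF cf] by simp
      show "AE x in lborel. norm (f x) \<le> norm (K * (1 / (1 + x\<^sup>2)))"
      proof (rule AE_I2)
        fix x :: real
        have "0 < 1 + x\<^sup>2" by (intro add_pos_nonneg; simp)
        then show "norm (f x) \<le> norm (K * (1 / (1 + x\<^sup>2)))" using bf[of x] K0 by simp
      qed
    qed
  qed
  have i1: "integrable lborel f1"
  proof (rule int)
    show "continuous_on UNIV f1" unfolding f1_def
      by (rule continuous_on_compose2[OF cont]) (use c0 in \<open>auto intro!: continuous_intros\<close>)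
    show "cmod (f1 x) \<le> K / (1 + x\<^sup>2)" for x using dec[of "of_real x"] c0 by (simp add: f1_def)
  qed
  have i2: "integrable lborel f2"
  proof (rule int)
    show "continuous_on UNIV f2" unfolding f2_def
      by (rule continuous_on_compose2[OF cont]) (use c in \<open>auto intro!: continuous_intros\<close>)
    show "cmod (f2 x) \<le> K / (1 + x\<^sup>2)" for x using dec[of "of_real x + \<i> * of_real \<eta>"] c by (simp add: f2_def)
  qed
  define A where "A n = integral {- real n..real n} f1" for n
  define B where "B n = integral {- real n..real n} f2" for n
  have bnd: "cmod (A (Suc n) - B (Suc n)) \<le> 2 * K * \<bar>\<eta>\<bar> / real (Suc n)" for n
  proof -
    define R where "R = real (Suc n)"
    have R: "R \<ge> 1" by (simp add: R_def)
    define a where "a = complex_of_real (- R)"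
    define b where "b = complex_of_real R"
    define z where "z = \<i> * complex_of_real \<eta>"
    have pts: "a \<in> S" "b \<in> S" "b + z \<in> S" "a + z \<in> S" using c c0 by (auto simp: S_def a_def b_def z_def)
    have rs: "contour_integral (linepath a b) h + (contour_integral (linepath b (b + z)) h +
     (contour_integral (linepath (b + z) (a + z)) h + contour_integral (linepath (a + z) a) h)) = 0"
      by (rule rect_sum[OF cvx cS finite.emptyI[THEN finite.insertI] dS pts])
    have e1: "contour_integral (linepath a b) h = A (Suc n)"
      unfolding A_def f1_def using R
      by (subst contour_integral_linepath_Reals_eq) (auto simp: a_def b_def R_def)
    have e3: "contour_integral (linepath (b + z) (a + z)) h = - B (Suc n)"
    proof -
      have "continuous_on (closed_segment (a + z) (b + z)) h"
        using closed_segment_subset[OF pts(4) pts(3) cvx] cS continuous_on_subset by blast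
      then have "contour_integral (linepath (b + z) (a + z)) h = - contour_integral (linepath (a + z) (b + z)) h"
        by (subst contour_integral_reverse_linepath) auto
      also have "contour_integral (linepath (a + z) (b + z)) h = contour_integral ((+) z \<circ> linepath a b) h"
        by (simp add: linepath_translate)
      also have "\<dots> = contour_integral (linepath a b) (\<lambda>x. h (x + z))" by (rule contour_integral_translate)
      also have "\<dots> = B (Suc n)"
        unfolding B_def f2_def using R
        by (subst contour_integral_linepath_Reals_eq) (auto simp: a_def b_def R_def z_def)
      finally show ?thesis .
    qed
    have side: "cmod (contour_integral (linepath p q) h) \<le> K / (1 + R\<^sup>2) * \<bar>\<eta>\<bar>"
      if pq: "p \<in> S" "q \<in> S" "q - p = z \<or> p - q = z" and re: "\<And>w. w \<in> closed_segment p q \<Longrightarrow> (Re w)\<^sup>2 = R\<^sup>2 \<and> \<bar>Im w\<bar> \<le> c" for p q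
    proof -
      have "continuous_on (closed_segment p q) h"
        using closed_segment_subset[OF pq(1,2) cvx] cS continuous_on_subset by blast
      then have hi: "(h has_contour_integral contour_integral (linepath p q) h) (linepath p q)"
        by (intro has_contour_integral_integral contour_integrable_continuous_linepath)
      have "cmod (contour_integral (linepath p q) h) \<le> K / (1 + R\<^sup>2) * cmod (q - p)"
      proof (rule has_contour_integral_bound_linepath[OF hi])
        show "0 \<le> K / (1 + R\<^sup>2)" using K0 by (simp add: add_pos_nonneg)
        fix w assume "w \<in> closed_segment p q"
        then show "cmod (h w) \<le> K / (1 + R\<^sup>2)" using dec re by metis
      qed
      moreover have "cmod (q - p) = \<bar>\<eta>\<bar>"
      proof -
        have "cmod (q - p) = cmod z" using pq(3) norm_minus_commute[of p q] by auto
        then show ?thesis by (simp add: z_def norm_mult)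
      qed
      ultimately show ?thesis by simp
    qed
    have s2: "cmod (contour_integral (linepath b (b + z)) h) \<le> K / (1 + R\<^sup>2) * \<bar>\<eta>\<bar>"
    proof (rule side)
      fix w assume "w \<in> closed_segment b (b + z)"
      then show "(Re w)\<^sup>2 = R\<^sup>2 \<and> \<bar>Im w\<bar> \<le> c"
        using seg_vert[of w R \<eta>] c by (simp add: b_def z_def)
    qed (use pts in auto)
    have s4: "cmod (contour_integral (linepath (a + z) a) h) \<le> K / (1 + R\<^sup>2) * \<bar>\<eta>\<bar>"
    proof (rule side)
      fix w assume "w \<in> closed_segment (a + z) a"
      then have "w \<in> closed_segment a (a + z)" by (simp add: closed_segment_commute)
      then show "(Re w)\<^sup>2 = R\<^sup>2 \<and> \<bar>Im w\<bar> \<le> c"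
        using seg_vert[of w "- R" \<eta>] c by (simp add: a_def z_def)
    qed (use pts in auto)
    define X where "X = contour_integral (linepath b (b + z)) h"
    define Y where "Y = contour_integral (linepath (a + z) a) h"
    have eq: "A (Suc n) - B (Suc n) = - (X + Y)"
      using rs e1 e3 unfolding X_def Y_def by (simp add: algebra_simps)
    have "cmod (A (Suc n) - B (Suc n)) = cmod (X + Y)" by (simp only: eq norm_minus_cancel)
    also have "\<dots> \<le> cmod X + cmod Y" by (rule norm_triangle_ineq)
    also have "\<dots> \<le> K / (1 + R\<^sup>2) * \<bar>\<eta>\<bar> + K / (1 + R\<^sup>2) * \<bar>\<eta>\<bar>"
      using s2 s4 unfolding X_def Y_def by (rule add_mono)
    also have "\<dots> = 2 * K * \<bar>\<eta>\<bar> / (1 + R\<^sup>2)" by (simp add: field_simps)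
    also have "\<dots> \<le> 2 * K * \<bar>\<eta>\<bar> / R"
    proof (rule divide_left_mono)
      have "R * 1 \<le> R * R" using R by (intro mult_left_mono) auto
      then show "R \<le> 1 + R\<^sup>2" by (simp add: power2_eq_square)
    qed (use K0 R in \<open>auto intro!: mult_pos_pos add_pos_nonneg\<close>)
    finally show ?thesis by (simp add: R_def)
  qed
  have infS: "filterlim (\<lambda>n. real (Suc n)) at_infinity sequentially"
    by (rule filterlim_at_top_imp_at_infinity filterlim_compose[OF filterlim_real_sequentially filterlim_Suc])+
  have L1: "(\<lambda>n. A (Suc n) - B (Suc n)) \<longlonglongrightarrow> (LINT x|lborel. f1 x) - (LINT x|lborel. f2 x)"
    unfolding A_def B_def using lint_lim[OF i1] lint_lim[OF i2]
    by (intro tendsto_diff LIMSEQ_Suc)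
  have L2: "(\<lambda>n. A (Suc n) - B (Suc n)) \<longlonglongrightarrow> 0"
  proof (rule Lim_null_comparison)
    show "\<forall>\<^sub>F n in sequentially. norm (A (Suc n) - B (Suc n)) \<le> 2 * K * \<bar>\<eta>\<bar> / real (Suc n)"
      using bnd by (intro always_eventually) auto
    show "(\<lambda>n. 2 * K * \<bar>\<eta>\<bar> / real (Suc n)) \<longlonglongrightarrow> 0"
      by (rule tendsto_divide_0[OF tendsto_const infS])
  qed
  from L1 L2 have "(LINT x|lborel. f1 x) - (LINT x|lborel. f2 x) = 0" using LIMSEQ_unique by blast
  then show ?thesis by (simp add: f1_def f2_def)
qed


lemma G_bound:
  assumes e: "expint b \<psi>" "b > 0" and z0: "\<forall>k\<le>m. Fn \<psi> (r + k) 0 = 0"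
    and b': "0 < b'" "b' < b"
    and dec: "\<And>z. \<bar>Im z\<bar> \<le> b' \<Longrightarrow> cmod (gf \<psi> r m z) \<le> K2 / (1 + (Re z)\<^sup>2)"
  shows "\<exists>C>0. \<forall>y. cmod (LINT u|lborel. gf \<psi> r m (of_real u) * exp (\<i> * of_real u * of_real y)) \<le> C * exp (- b' * \<bar>y\<bar>)"
proof -
  define I where "I = (LINT x|lborel. 1 / (1 + x\<^sup>2) :: real)"
  have I0: "I \<ge> 0" unfolding I_def by (intro integral_nonneg_AE) (auto intro!: AE_I2 add_pos_nonneg)
  define C where "C = \<bar>K2\<bar> * I + 1"
  have C0: "C > 0" unfolding C_def using I0 by (intro add_nonneg_pos mult_nonneg_nonneg) auto
  have "cmod (LINT u|lborel. gf \<psi> r m (of_real u) * exp (\<i> * of_real u * of_real y)) \<le> C * exp (- b' * \<bar>y\<bar>)" for y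
  proof -
    define \<eta> where "\<eta> = (if y \<ge> 0 then b' else - b')"
    have \<eta>: "\<bar>\<eta>\<bar> \<le> b'" "\<eta> * y = b' * \<bar>y\<bar>" using b' by (auto simp: \<eta>_def)
    define h where "h w = gf \<psi> r m w * exp (\<i> * w * of_real y)" for w
    have isc: "isCont h w" if "\<bar>Im w\<bar> \<le> b'" for w
    proof -
      have "isCont (gf \<psi> r m) w" by (rule gf_cont[OF e z0]) (use that b' in simp)
      then show ?thesis unfolding h_def[abs_def] by (intro continuous_intros)
    qed
    have cont: "continuous_on {w. \<bar>Im w\<bar> \<le> b'} h"
      using isc by (intro continuous_at_imp_continuous_on) auto
    have diff: "h field_differentiable at w" if "\<bar>Im w\<bar> \<le> b'" "w \<noteq> 0" for w
    proof -
      have "gf \<psi> r m field_differentiable at w" by (rule gf_diff[OF e(1)]) (use that b' in auto)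
      moreover have "(\<lambda>w. exp (\<i> * w * of_real y)) field_differentiable at w"
      proof -
        have "(\<lambda>w. exp (\<i> * w * of_real y)) holomorphic_on UNIV" by (intro holomorphic_intros)
        then show ?thesis using holomorphic_on_imp_differentiable_at by blast
      qed
      ultimately show ?thesis unfolding h_def[abs_def] by (rule field_differentiable_mult)
    qed
    have nexp: "cmod (exp (\<i> * w * of_real y)) = exp (- (Im w * y))" for w by simp
    have hdec: "cmod (h w) \<le> (\<bar>K2\<bar> * exp (b' * \<bar>y\<bar>)) / (1 + (Re w)\<^sup>2)" if w: "\<bar>Im w\<bar> \<le> b'" for w
    proof -
      have p: "0 < 1 + (Re w)\<^sup>2" by (intro add_pos_nonneg; simp)
      have "cmod (gf \<psi> r m w) \<le> \<bar>K2\<bar> / (1 + (Re w)\<^sup>2)"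
        using dec[OF w] p by (meson abs_ge_self divide_right_mono less_imp_le order_trans)
      moreover have "exp (- (Im w * y)) \<le> exp (b' * \<bar>y\<bar>)"
      proof -
        have "- (Im w * y) \<le> \<bar>Im w\<bar> * \<bar>y\<bar>" by (simp add: abs_mult[symmetric])
        also have "\<dots> \<le> b' * \<bar>y\<bar>" using w by (intro mult_right_mono) auto
        finally show ?thesis by simp
      qed
      ultimately have "cmod (h w) \<le> \<bar>K2\<bar> / (1 + (Re w)\<^sup>2) * exp (b' * \<bar>y\<bar>)"
        unfolding h_def norm_mult nexp by (intro mult_mono) auto
      then show ?thesis by simp
    qed
    have shift: "(LINT x|lborel. h (of_real x)) = (LINT x|lborel. h (of_real x + \<i> * of_real \<eta>))"
      by (rule contour_shift[OF \<eta>(1) cont diff hdec]) auto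
    have pt: "cmod (h (of_real x + \<i> * of_real \<eta>)) \<le> \<bar>K2\<bar> * exp (- b' * \<bar>y\<bar>) * (1 / (1 + x\<^sup>2))" for x
    proof -
      have p: "0 < 1 + x\<^sup>2" by (intro add_pos_nonneg; simp)
      have "cmod (gf \<psi> r m (of_real x + \<i> * of_real \<eta>)) \<le> \<bar>K2\<bar> / (1 + x\<^sup>2)"
        using dec[of "of_real x + \<i> * of_real \<eta>"] \<eta>(1) p
        by simp (meson abs_ge_self divide_right_mono less_imp_le order_trans)
      moreover have "cmod (exp (\<i> * (of_real x + \<i> * of_real \<eta>) * of_real y)) = exp (- b' * \<bar>y\<bar>)"
        using \<eta>(2) by (simp only: nexp) simp
      ultimately show ?thesis unfolding h_def norm_mult
        by (simp add: mult_right_mono mult_ac divide_inverse)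
    qed
    have "cmod (LINT x|lborel. h (of_real x + \<i> * of_real \<eta>)) \<le> \<bar>K2\<bar> * exp (- b' * \<bar>y\<bar>) * I"
    proof (cases "integrable lborel (\<lambda>x. h (of_real x + \<i> * of_real \<eta>))")
      case True
      have "cmod (LINT x|lborel. h (of_real x + \<i> * of_real \<eta>)) \<le> (LINT x|lborel. \<bar>K2\<bar> * exp (- b' * \<bar>y\<bar>) * (1 / (1 + x\<^sup>2)))"
        by (rule Bochner_Integration.integral_norm_bound_integral[OF True _ pt])
          (intro Bochner_Integration.integrable_mult_right integrable_inv_sq)
      also have "\<dots> = \<bar>K2\<bar> * exp (- b' * \<bar>y\<bar>) * I" unfolding I_def by (rule integral_mult_right_zero)
      finally show ?thesis .
    next
      case False
      then show ?thesis using I0 by (simp add: not_integrable_integral_eq)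
    qed
    also have "\<dots> \<le> C * exp (- b' * \<bar>y\<bar>)"
      unfolding C_def by (simp add: algebra_simps)
    finally show ?thesis using shift by (simp add: h_def)
  qed
  then show ?thesis using C0 by blast
qed


lemma test_deriv:
  assumes "test_function \<phi>"
  shows "test_function (deriv \<phi>)"
proof -
  from assms obtain R where R: "\<forall>x. R < \<bar>x\<bar> \<longrightarrow> \<phi> x = 0"
    and d: "\<forall>n x. (deriv ^^ n) \<phi> differentiable (at x)"
    unfolding test_function_def by blast
  have "\<forall>n x. (deriv ^^ n) (deriv \<phi>) differentiable (at x)"
    using d by (metis deriv_funpow_Suc)
  moreover have "\<forall>x. R < \<bar>x\<bar> \<longrightarrow> deriv \<phi> x = 0"
  proof (intro allI impI)
    fix x assume x: "R < \<bar>x\<bar>"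
    have "((\<lambda>x. 0::real) has_real_derivative 0) (at x)" by simp
    then have "(\<phi> has_real_derivative 0) (at x)"
    proof (rule has_field_derivative_transform_within_open[where S="{x. R < \<bar>x\<bar>}"])
      show "open {x::real. R < \<bar>x\<bar>}" by (intro open_Collect_less continuous_intros)
    qed (use x R in auto)
    then show "deriv \<phi> x = 0" by (rule DERIV_imp_deriv)
  qed
  ultimately show ?thesis unfolding test_function_def by blast
qed

theorem mainTheorem11:
  fixes b :: real and L r :: nat and \<psi>\<^sub>0 :: "real \<Rightarrow> complex"
  assumes "b > 0"
    and "L \<ge> 1"
    and "X_space b (L + 1) \<psi>\<^sub>0"
    and "\<forall>s\<le>L + 1. cderiv s (fourier \<psi>\<^sub>0) 0 = 0"
    and "r \<le> L + 1"
  shows "\<forall>b'. 0 < b' \<and> b' < b \<longrightarrow>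
           (\<exists>C>0. \<forall>(k::nat) (x::real).
              cmod (inv_fourier (Psi_hat \<psi>\<^sub>0 L r k) x) \<le> C * 2 ^ k * exp (- b' * 2 ^ k * \<bar>x\<bar>))"
proof (intro allI impI)
  fix b' :: real assume b': "0 < b' \<and> b' < b"
  from assms(3) obtain g where g0: "g 0 = \<psi>\<^sub>0" and G: "\<forall>\<alpha>\<le>L + 1.
          g \<alpha> \<in> borel_measurable lborel \<and>
          (\<forall>\<beta>\<le>L + 1. integrable lborel (\<lambda>x. (exp (b * \<bar>x\<bar>) * \<bar>x\<bar> ^ \<beta> * cmod (g \<alpha> x))\<^sup>2)) \<and>
          (\<forall>\<phi>. test_function \<phi> \<longrightarrow>
             (LINT x|lborel. \<psi>\<^sub>0 x * complex_of_real ((deriv ^^ \<alpha>) \<phi> x))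
               = (-1) ^ \<alpha> * (LINT x|lborel. g \<alpha> x * complex_of_real (\<phi> x)))"
    unfolding X_space_def by blast
  have ex: "expint b (g \<alpha>)" if "\<alpha> \<le> L + 1" for \<alpha>
  proof (rule expintI)
    show "g \<alpha> \<in> borel_measurable lborel" using G that by blast
    have "integrable lborel (\<lambda>x. (exp (b * \<bar>x\<bar>) * \<bar>x\<bar> ^ 0 * cmod (g \<alpha> x))\<^sup>2)" using G that by blast
    then show "integrable lborel (\<lambda>x. (exp (b * \<bar>x\<bar>) * cmod (g \<alpha> x))\<^sup>2)" by simp
  qed
  have ibp: "(LINT x|lborel. \<psi>\<^sub>0 x * complex_of_real ((deriv ^^ \<alpha>) \<phi> x))
               = (-1) ^ \<alpha> * (LINT x|lborel. g \<alpha> x * complex_of_real (\<phi> x))"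
    if "\<alpha> \<le> L + 1" "test_function \<phi>" for \<alpha> \<phi>
    using G that by blast
  have e0: "expint b \<psi>\<^sub>0" using ex[of 0] g0 by simp
  have e1: "expint b (g 1)" using ex[of 1] by simp
  have e2: "expint b (g 2)" using ex[of 2] assms(2) by simp
  have h1: "(LINT x|lborel. \<psi>\<^sub>0 x * of_real (deriv \<phi> x)) = - (LINT x|lborel. g 1 x * of_real (\<phi> x))"
    if "test_function \<phi>" for \<phi>
    using ibp[of 1 \<phi>] that by simp
  have h2: "(LINT x|lborel. g 1 x * of_real (deriv \<phi> x)) = - (LINT x|lborel. g 2 x * of_real (\<phi> x))"
    if "test_function \<phi>" for \<phi>
  proof -
    have A: "(LINT x|lborel. \<psi>\<^sub>0 x * of_real (deriv (deriv \<phi>) x)) = - (LINT x|lborel. g 1 x * of_real (deriv \<phi> x))"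
      using ibp[of 1 "deriv \<phi>"] test_deriv[OF that] by simp
    have B: "(LINT x|lborel. \<psi>\<^sub>0 x * of_real (deriv (deriv \<phi>) x)) = (LINT x|lborel. g 2 x * of_real (\<phi> x))"
      using ibp[of 2 \<phi>] that assms(2) by (simp add: numeral_2_eq_2)
    from A B show ?thesis by (simp add: minus_equation_iff)
  qed
  have cd: "cderiv n (fourier \<psi>\<^sub>0) = (\<lambda>x. Fn \<psi>\<^sub>0 n (of_real x))" for n
    by (rule cderiv_Fn[OF e0 assms(1)])
  define m where "m = L + 1 - r"
  have z0: "\<forall>k\<le>m. Fn \<psi>\<^sub>0 (r + k) 0 = 0"
  proof (intro allI impI)
    fix k assume "k \<le> m"
    then have "r + k \<le> L + 1" using assms(5) by (simp add: m_def)
    then have "cderiv (r + k) (fourier \<psi>\<^sub>0) 0 = 0" using assms(4) by blast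
    then show "Fn \<psi>\<^sub>0 (r + k) 0 = 0" by (simp add: cd)
  qed
  obtain K where K: "\<And>z. \<bar>Im z\<bar> \<le> b' \<Longrightarrow> (1 + cmod z ^ 2) * cmod (Fn \<psi>\<^sub>0 r z) \<le> K"
    using Fn_decay[OF e0 e1 e2 h1 h2, of b' r] b' by blast
  obtain K2 where K2: "\<And>z. \<bar>Im z\<bar> \<le> b' \<Longrightarrow> cmod (gf \<psi>\<^sub>0 r m z) \<le> K2 / (1 + (Re z)\<^sup>2)"
    using gf_decay[OF e0 assms(1) z0 K] by blast
  obtain C where C: "C > 0"
    and CG: "\<And>y. cmod (LINT u|lborel. gf \<psi>\<^sub>0 r m (of_real u) * exp (\<i> * of_real u * of_real y)) \<le> C * exp (- b' * \<bar>y\<bar>)"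
    using G_bound[OF e0 assms(1) z0 _ _ K2] b' by blast
  have "cmod (inv_fourier (Psi_hat \<psi>\<^sub>0 L r k) x) \<le> C * 2 ^ k * exp (- b' * 2 ^ k * \<bar>x\<bar>)" for k x
  proof -
    define s :: real where "s = 2 ^ k"
    have s: "s > 0" by (simp add: s_def)
    have PH: "Psi_hat \<psi>\<^sub>0 L r k \<xi> = gf \<psi>\<^sub>0 r m (of_real (\<xi> / s))" for \<xi>
      by (simp add: Psi_hat_def cd gf_def m_def s_def)
    have "(LINT \<xi>|lborel. Psi_hat \<psi>\<^sub>0 L r k \<xi> * cis (\<xi> * x))
        = \<bar>s\<bar> *\<^sub>R (LINT u|lborel. Psi_hat \<psi>\<^sub>0 L r k (0 + s * u) * cis ((0 + s * u) * x))"
      using s by (intro lborel_integral_real_affine) simp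
    also have "(LINT u|lborel. Psi_hat \<psi>\<^sub>0 L r k (0 + s * u) * cis ((0 + s * u) * x))
        = (LINT u|lborel. gf \<psi>\<^sub>0 r m (of_real u) * exp (\<i> * of_real u * of_real (s * x)))"
      using s by (intro Bochner_Integration.integral_cong) (auto simp: PH cis_conv_exp mult_ac)
    finally have eq: "(LINT \<xi>|lborel. Psi_hat \<psi>\<^sub>0 L r k \<xi> * cis (\<xi> * x))
        = s *\<^sub>R (LINT u|lborel. gf \<psi>\<^sub>0 r m (of_real u) * exp (\<i> * of_real u * of_real (s * x)))"
      using s by simp
    have "cmod (inv_fourier (Psi_hat \<psi>\<^sub>0 L r k) x) = cmod c0 * (s * cmod (LINT u|lborel. gf \<psi>\<^sub>0 r m (of_real u) * exp (\<i> * of_real u * of_real (s * x))))"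
      unfolding inv_fourier_def eq c0_def[symmetric] using s by (simp add: norm_mult)
    also have "\<dots> \<le> 1 * (s * (C * exp (- b' * \<bar>s * x\<bar>)))"
      using s by (intro mult_mono cmod_c0 mult_left_mono CG) auto
    also have "\<dots> = C * 2 ^ k * exp (- b' * 2 ^ k * \<bar>x\<bar>)"
      using s by (simp add: s_def abs_mult mult_ac)
    finally show ?thesis .
  qed
  then show "\<exists>C>0. \<forall>(k::nat) (x::real).
              cmod (inv_fourier (Psi_hat \<psi>\<^sub>0 L r k) x) \<le> C * 2 ^ k * exp (- b' * 2 ^ k * \<bar>x\<bar>)"
    using C by blast
qed


end
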